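(* Fix $n\in\mathbb{N}$. For each $N \ge n$ let $(\nu_t^{(1:N)})_{t\ge1}$ be random vectors of non-negative integers with $\sum_i\nu_t^{(i)} = N$, such that for all sufficiently large $N$ and all $u\ge0$, $\tau_N(u)<\infty$ almost surely. Suppose there is a deterministic sequence $b_N\to0$ such that for all sufficiently large $N$, almost surely and uniformly in $t\ge1$, $$\frac{1}{(N)_3}\sum_{i=1}^N \mathbb{E}\big[(\nu_t^{(i)})_3 \,\big|\, \mathcal{F}_{t-1}\big] \leq b_N \frac{1}{(N)_2}\sum_{i=1}^N \mathbb{E}\big[(\nu_t^{(i)})_2 \,\big|\, \mathcal{F}_{t-1}\big].$$ Fix $k\in\mathbb{N}$, set $i_0 := 0$, $i_k := k$, and let $0 = t_0 \le t_1 \le\cdots\le t_k \le t$. Then $$\lim_{N\to\infty}\mathbb{E}\Bigg[\sum_{\substack{r_1<\cdots<r_k:\\ r_i\le\tau_N(t_i)\,\forall i}}\Bigg(\prod_{i=1}^k p_{r_i}\Bigg)\Bigg(\prod_{\substack{r=1\\ r\notin\{r_1,\dots,r_k\}}}^{\tau_N(t)}(1-p_r)\Bigg)\Bigg] \le \alpha_n^k e^{-\alpha_n t}\sum_{\substack{i_1\le\cdots\le i_{k-1}\in\{0,\dots,k\}:\\ i_j\ge j\ \forall j}}\prod_{j=1}^k\frac{(t_j-t_{j-1})^{i_j-i_{j-1}}}{(i_j-i_{j-1})!},$$ where $\alpha_n := n(n-1)/2$.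
   Context: $(x)_k$ is the falling factorial; $\mathcal{F}_t := \sigma(\nu_s^{(1:N)}: s\le t)$ ($\mathcal{F}_0$ trivial). $c_N(r) := \frac{1}{(N)_2}\sum_i(\nu_r^{(i)})_2$; $\tau_N(u) := \inf\{s\in\{0,1,\dots\}: \sum_{r=1}^s c_N(r)\ge u\}$. $p_r := 1 - \frac{1}{(N)_n}\sum_{i_1,\dots,i_n\text{ distinct}}\nu_r^{(i_1)}\cdots\nu_r^{(i_n)}$. The indices $r, r_i$ range over positive integers. *)

theory Defs
  imports "HOL-Probability.Probability"
begin

definition ff :: "nat \<Rightarrow> nat \<Rightarrow> real" where
  "ff x k = (\<Prod>j<k. (real x - real j))"

text \<open>Offspring numbers: nu N t i w is nu_t^{(i)} for population size N,
  generation t >= 1, individual i in {1..N}, outcome w.\<close>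

definition cN :: "(nat \<Rightarrow> nat \<Rightarrow> nat) \<Rightarrow> nat \<Rightarrow> nat \<Rightarrow> real" where
  "cN v N r = (1 / ff N 2) * (\<Sum>i=1..N. ff (v r i) 2)"

definition tauN :: "(nat \<Rightarrow> nat \<Rightarrow> nat) \<Rightarrow> nat \<Rightarrow> real \<Rightarrow> enat" where
  "tauN v N u = (if \<exists>s. u \<le> (\<Sum>r=1..s. cN v N r)
                 then enat (LEAST s. u \<le> (\<Sum>r=1..s. cN v N r)) else \<infinity>)"

definition pr :: "nat \<Rightarrow> (nat \<Rightarrow> nat \<Rightarrow> nat) \<Rightarrow> nat \<Rightarrow> nat \<Rightarrow> real" where
  "pr n v N r = 1 - (1 / ff N n) *
     (\<Sum>is\<in>{is. length is = n \<and> distinct is \<and> set is \<subseteq> {1..N}}.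
        (\<Prod>j<n. real (v r (is ! j))))"

text \<open>The natural filtration F_t = sigma(nu_s^{(1:N)} : s <= t); F_0 is trivial.\<close>
definition filt :: "'a measure \<Rightarrow> (nat \<Rightarrow> nat \<Rightarrow> 'a \<Rightarrow> nat) \<Rightarrow> nat \<Rightarrow> nat \<Rightarrow> 'a measure" where
  "filt M v N t = sigma (space M)
     {v s i -` A \<inter> space M | s i A. 1 \<le> s \<and> s \<le> t \<and> 1 \<le> i \<and> i \<le> N}"

text \<open>The random variable inside the expectation on the left-hand side.
  Index lists rs = [r_1,...,r_k] strictly increasing, with 1 <= r_j <= tau_N(t_j);
  tt j = t_j for j = 1..k and T = t.\<close>
definition lhs_rv :: "nat \<Rightarrow> (nat \<Rightarrow> nat \<Rightarrow> nat) \<Rightarrow> nat \<Rightarrow> nat \<Rightarrow> (nat \<Rightarrow> real) \<Rightarrow> real \<Rightarrow> real" where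
  "lhs_rv n v N k tt T =
     (\<Sum>rs\<in>{rs. length rs = k \<and> sorted_wrt (<) rs \<and>
               (\<forall>j<k. 1 \<le> rs ! j \<and> enat (rs ! j) \<le> tauN v N (tt (Suc j)))}.
        (\<Prod>j<k. pr n v N (rs ! j)) *
        (\<Prod>r\<in>{1..the_enat (tauN v N T)} - set rs. (1 - pr n v N r)))"

text \<open>Index sequences are functions nat => nat that vanish beyond k.\<close>
definition alpha :: "nat \<Rightarrow> real" where
  "alpha n = real n * (real n - 1) / 2"

definition rhs :: "nat \<Rightarrow> nat \<Rightarrow> (nat \<Rightarrow> real) \<Rightarrow> real \<Rightarrow> real" where
  "rhs n k tt T = alpha n ^ k * exp (- alpha n * T) *
     (\<Sum>ii\<in>{ii. ii 0 = 0 \<and> ii k = k \<and> (\<forall>j<k. ii j \<le> ii (Suc j)) \<and>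
               (\<forall>j\<le>k. j \<le> ii j) \<and> (\<forall>j>k. ii j = 0)}.
        (\<Prod>j=1..k. (tt j - tt (j - 1)) ^ (ii j - ii (j - 1)) / fact (ii j - ii (j - 1))))"

end

theory Submission
  imports Defs
begin

fun Srec :: "(nat \<Rightarrow> nat) \<Rightarrow> nat \<Rightarrow> nat set \<Rightarrow> real" where
  "Srec w 0 I = 1"
| "Srec w (Suc m) I = (\<Sum>a\<in>I. real (w a) * Srec w m (I - {a}))"

fun Urec :: "(nat \<Rightarrow> nat) \<Rightarrow> nat \<Rightarrow> nat set \<Rightarrow> real" where
  "Urec w 0 I = 0"
| "Urec w (Suc m) I = (\<Sum>a\<in>I. real (w a) * (real (w a) * Srec w m (I - {a}) + Urec w m (I - {a})))"

definition DL :: "nat \<Rightarrow> nat set \<Rightarrow> nat list set" where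
  "DL m I = {is. length is = m \<and> distinct is \<and> set is \<subseteq> I}"

lemma DL_Suc: "DL (Suc m) I = (\<lambda>(a,is). a # is) ` (SIGMA a:I. DL m (I - {a}))"
proof (rule set_eqI)
  fix xs show "xs \<in> DL (Suc m) I \<longleftrightarrow> xs \<in> (\<lambda>(a,is). a # is) ` (SIGMA a:I. DL m (I - {a}))"
    by (cases xs) (auto simp: DL_def image_iff)
qed

lemma Srec_list:
  assumes "finite I"
  shows "(\<Sum>is\<in>DL m I. \<Prod>j<m. real (w (is ! j))) = Srec w m I"
  using assms
proof (induction m arbitrary: I)
  case 0
  have "DL 0 I = {[]}" by (auto simp: DL_def)
  then show ?case by simp
next
  case (Suc m)
  have inj: "inj_on (\<lambda>(a,is). a # is) (SIGMA a:I. DL m (I - {a}))"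
    by (auto simp: inj_on_def)
  have "(\<Sum>is\<in>DL (Suc m) I. \<Prod>j<Suc m. real (w (is ! j)))
      = (\<Sum>x\<in>(SIGMA a:I. DL m (I - {a})). \<Prod>j<Suc m. real (w (((\<lambda>(a,is). a # is) x) ! j)))"
    unfolding DL_Suc by (subst sum.reindex[OF inj]) (simp add: case_prod_unfold)
  also have "\<dots> = (\<Sum>a\<in>I. \<Sum>is\<in>DL m (I - {a}). real (w a) * (\<Prod>j<m. real (w (is ! j))))"
  proof -
    have fin: "\<And>a. finite (DL m (I - {a}))"
    proof -
      fix a
      have "DL m (I - {a}) \<subseteq> {xs. set xs \<subseteq> I \<and> length xs = m}" by (auto simp: DL_def)
      moreover have "finite {xs. set xs \<subseteq> I \<and> length xs = m}"
        using finite_lists_length_eq[OF Suc.prems] .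
      ultimately show "finite (DL m (I - {a}))" by (rule finite_subset)
    qed
    have "(\<Sum>a\<in>I. \<Sum>is\<in>DL m (I - {a}). real (w a) * (\<Prod>j<m. real (w (is ! j))))
       = (\<Sum>x\<in>(SIGMA a:I. DL m (I - {a})). (\<lambda>a is. real (w a) * (\<Prod>j<m. real (w (is ! j)))) (fst x) (snd x))"
      using sum.Sigma[OF Suc.prems, of "\<lambda>a. DL m (I - {a})" "\<lambda>a is. real (w a) * (\<Prod>j<m. real (w (is ! j)))"] fin
      by (simp add: case_prod_unfold)
    then show ?thesis
      by (auto simp del: prod.lessThan_Suc simp add: prod.lessThan_Suc_shift case_prod_unfold intro!: sum.cong)
  qed
  also have "\<dots> = Srec w (Suc m) I"
    using Suc by (simp add: sum_distrib_left[symmetric])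
  finally show ?case .
qed

lemma ff_0 [simp]: "ff x 0 = 1" by (simp add: ff_def)
lemma ff_Suc: "ff x (Suc m) = ff x m * (real x - real m)" by (simp add: ff_def)
lemma ff_zero: "x < m \<Longrightarrow> ff x m = 0"
  unfolding ff_def by (rule prod_zero) auto
lemma ff_nonneg: "0 \<le> ff x m"
proof (cases "x < m")
  case True then show ?thesis by (simp add: ff_zero)
next
  case False then show ?thesis unfolding ff_def by (intro prod_nonneg) auto
qed
lemma ff_pos: "m \<le> x \<Longrightarrow> 0 < ff x m"
  unfolding ff_def by (intro prod_pos) auto
lemma ff_mono: "x \<le> y \<Longrightarrow> ff x m \<le> ff y m"
proof (cases "x < m")
  case True then show ?thesis by (simp add: ff_zero ff_nonneg)
next
  case False
  assume "x \<le> y"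
  then show ?thesis using False unfolding ff_def by (intro prod_mono) auto
qed
lemma ff_le_pow: "ff x m \<le> real x ^ m"
proof (cases "x < m")
  case True then show ?thesis by (simp add: ff_zero)
next
  case False
  have "ff x m \<le> (\<Prod>j<m. real x)" using False unfolding ff_def by (intro prod_mono) auto
  then show ?thesis by simp
qed
lemma ff_Suc_shift: "1 \<le> x \<Longrightarrow> ff x (Suc m) = real x * ff (x - 1) m"
  unfolding ff_def by (simp del: prod.lessThan_Suc add: prod.lessThan_Suc_shift of_nat_diff algebra_simps)
lemma ff_2: "ff x 2 = real x * (real x - 1)" by (simp add: ff_def numeral_2_eq_2)
lemma ff_3: "ff x 3 = real x * (real x - 1) * (real x - 2)" by (simp add: ff_def numeral_3_eq_3)

lemma ff_diff: "x \<le> y \<Longrightarrow> ff y j - ff x j \<le> (real y - real x) * real j * real y ^ (j - 1)"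
proof (induction j)
  case 0 then show ?case by simp
next
  case (Suc j)
  show ?case
  proof (cases "y \<le> j")
    case True
    then have "ff y (Suc j) = 0" "ff x (Suc j) = 0" using Suc.prems by (auto intro!: ff_zero)
    then show ?thesis using Suc.prems by simp
  next
    case False
    have e: "ff y (Suc j) - ff x (Suc j) = (ff y j - ff x j) * (real y - j) + ff x j * (real y - real x)"
      by (simp add: ff_Suc algebra_simps)
    have a: "(ff y j - ff x j) * (real y - j) \<le> ((real y - real x) * real j * real y ^ (j - 1)) * real y"
      using Suc False ff_mono[OF Suc.prems, of j] by (intro mult_mono) auto
    have b: "ff x j * (real y - real x) \<le> real y ^ j * (real y - real x)"
      using Suc.prems ff_le_pow[of x j] power_mono[of "real x" "real y" j]
      by (intro mult_right_mono) auto
    have c: "((real y - real x) * real j * real y ^ (j - 1)) * real y = (real y - real x) * real j * real y ^ j"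
      by (cases j) (auto simp: algebra_simps)
    show ?thesis using a b c e by (simp add: algebra_simps)
  qed
qed

lemma sum_remove_real: "finite I \<Longrightarrow> a \<in> I \<Longrightarrow> real (sum w (I - {a})) = real (sum w I) - real (w a)"
  by (simp add: of_nat_sum sum_diff1)

lemma A1: "finite I \<Longrightarrow> Srec w (Suc m) I = real (sum w I) * Srec w m I - Urec w m I"
proof (induction m arbitrary: I)
  case 0 then show ?case by (simp add: of_nat_sum)
next
  case (Suc m)
  have "Srec w (Suc (Suc m)) I = (\<Sum>a\<in>I. real (w a) * (real (sum w (I - {a})) * Srec w m (I - {a}) - Urec w m (I - {a})))"
    using Suc by (simp only: Srec.simps(2)) (intro sum.cong, auto)
  also have "\<dots> = (\<Sum>a\<in>I. real (sum w I) * (real (w a) * Srec w m (I - {a})) - real (w a) * (real (w a) * Srec w m (I - {a}) + Urec w m (I - {a})))"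
  proof (intro sum.cong refl)
    fix a assume "a \<in> I"
    have sr: "real (sum w (I - {a})) = real (sum w I) - real (w a)" by (rule sum_remove_real[OF Suc.prems \<open>a \<in> I\<close>])
    then show "real (w a) * (real (sum w (I - {a})) * Srec w m (I - {a}) - Urec w m (I - {a})) =
         real (sum w I) * (real (w a) * Srec w m (I - {a})) - real (w a) * (real (w a) * Srec w m (I - {a}) + Urec w m (I - {a}))"
      unfolding sr by (simp add: algebra_simps del: of_nat_sum)
  qed
  also have "\<dots> = real (sum w I) * Srec w (Suc m) I - Urec w (Suc m) I"
    by (simp only: Srec.simps(2) Urec.simps(2) sum_subtractf sum_distrib_left)
  finally show ?case .
qed

lemma A2: "finite I \<Longrightarrow> Urec w (Suc m) I - real (Suc m) * Srec w (Suc m) I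
    = real (Suc m) * (\<Sum>b\<in>I. ff (w b) 2 * Srec w m (I - {b}))"
proof (induction m arbitrary: I)
  case 0 then show ?case by (simp add: ff_2 sum_subtractf[symmetric] algebra_simps power2_eq_square)
next
  case (Suc m)
  have fin: "\<And>a. finite (I - {a})" using Suc.prems by auto
  have "Urec w (Suc (Suc m)) I - real (Suc (Suc m)) * Srec w (Suc (Suc m)) I
      = (\<Sum>a\<in>I. ff (w a) 2 * Srec w (Suc m) (I - {a}) + real (w a) * (Urec w (Suc m) (I - {a}) - real (Suc m) * Srec w (Suc m) (I - {a})))"
    by (simp only: Srec.simps(2)[of w "Suc m"] Urec.simps(2)[of w "Suc m"] sum_distrib_left sum_subtractf[symmetric])
       (intro sum.cong refl, simp add: ff_2 algebra_simps)
  also have "\<dots> = (\<Sum>a\<in>I. ff (w a) 2 * Srec w (Suc m) (I - {a})) + real (Suc m) * (\<Sum>a\<in>I. \<Sum>b\<in>{b\<in>I. b \<noteq> a}. real (w a) * (ff (w b) 2 * Srec w m (I - {a} - {b})))"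
  proof -
    have "\<And>a. real (w a) * (Urec w (Suc m) (I - {a}) - real (Suc m) * Srec w (Suc m) (I - {a}))
       = real (Suc m) * (\<Sum>b\<in>{b\<in>I. b \<noteq> a}. real (w a) * (ff (w b) 2 * Srec w m (I - {a} - {b})))"
    proof -
      fix a
      have "{b\<in>I. b \<noteq> a} = I - {a}" by auto
      then show "?thesis a" using Suc.IH[OF fin, of a] by (simp add: sum_distrib_left algebra_simps)
    qed
    then show ?thesis by (simp add: sum.distrib sum_distrib_left)
  qed
  also have "(\<Sum>a\<in>I. \<Sum>b\<in>{b\<in>I. b \<noteq> a}. real (w a) * (ff (w b) 2 * Srec w m (I - {a} - {b})))
      = (\<Sum>b\<in>I. \<Sum>a\<in>{a\<in>I. b \<noteq> a}. real (w a) * (ff (w b) 2 * Srec w m (I - {a} - {b})))"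
    by (rule sum.swap_restrict) (use Suc.prems in auto)
  also have "\<dots> = (\<Sum>b\<in>I. ff (w b) 2 * Srec w (Suc m) (I - {b}))"
  proof (intro sum.cong refl)
    fix b assume "b \<in> I"
    have e: "{a\<in>I. b \<noteq> a} = I - {b}" by auto
    have "(\<Sum>a\<in>{a\<in>I. b \<noteq> a}. real (w a) * (ff (w b) 2 * Srec w m (I - {a} - {b})))
        = ff (w b) 2 * (\<Sum>a\<in>I - {b}. real (w a) * Srec w m (I - {b} - {a}))"
      unfolding e sum_distrib_left by (intro sum.cong refl) (simp add: Diff_insert2[symmetric] insert_commute algebra_simps)
    then show "(\<Sum>a\<in>{a\<in>I. b \<noteq> a}. real (w a) * (ff (w b) 2 * Srec w m (I - {a} - {b})))
        = ff (w b) 2 * Srec w (Suc m) (I - {b})" by (simp only: Srec.simps(2))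
  qed
  finally show ?case by (simp add: algebra_simps)
qed

lemma Rrec: "finite I \<Longrightarrow> Srec w (Suc (Suc m)) I
   = (real (sum w I) - real (Suc m)) * Srec w (Suc m) I - real (Suc m) * (\<Sum>b\<in>I. ff (w b) 2 * Srec w m (I - {b}))"
  using A1[of I w "Suc m"] A2[of I w m] by (simp add: algebra_simps)

lemma alpha_Suc: "alpha (Suc m) = alpha m + real m"
  by (simp add: alpha_def field_simps)
lemma alpha_0 [simp]: "alpha 0 = 0" and alpha_1 [simp]: "alpha 1 = 0" and alpha_S0 [simp]: "alpha (Suc 0) = 0"
  by (simp_all add: alpha_def)
lemma alpha_nonneg: "0 \<le> alpha m"
  by (cases m) (auto simp: alpha_def)

lemma ff2_nonneg: "0 \<le> ff x 2" by (rule ff_nonneg)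

lemma ff2_zero: "w < 2 \<Longrightarrow> ff w 2 = 0" by (rule ff_zero)

lemma B1: "finite I \<Longrightarrow> 0 \<le> Srec w m I \<and> Srec w m I \<le> ff (sum w I) m"
proof (induction m arbitrary: I)
  case 0 then show ?case by simp
next
  case (Suc m)
  have fin: "\<And>a. finite (I - {a})" using Suc.prems by auto
  have nn: "0 \<le> Srec w (Suc m) I"
    using Suc.IH[OF fin] by (simp add: sum_nonneg)
  have "Srec w (Suc m) I \<le> (\<Sum>a\<in>I. real (w a) * ff (sum w I - 1) m)"
    unfolding Srec.simps
  proof (intro sum_mono)
    fix a assume a: "a \<in> I"
    show "real (w a) * Srec w m (I - {a}) \<le> real (w a) * ff (sum w I - 1) m"
    proof (cases "w a = 0")
      case True then show ?thesis by simp
    next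
      case False
      have "sum w (I - {a}) = sum w I - w a" using a Suc.prems by (simp add: sum_diff1_nat)
      then have "sum w (I - {a}) \<le> sum w I - 1" using False by simp
      then have "Srec w m (I - {a}) \<le> ff (sum w I - 1) m"
        using Suc.IH[OF fin, of a] ff_mono by (meson order.trans)
      then show ?thesis by (intro mult_left_mono) auto
    qed
  qed
  also have "\<dots> \<le> ff (sum w I) (Suc m)"
  proof (cases "sum w I = 0")
    case True
    then have "\<forall>a\<in>I. w a = 0" using Suc.prems by simp
    then show ?thesis by (simp add: ff_nonneg)
  next
    case False
    then show ?thesis by (simp add: ff_Suc_shift sum_distrib_right)
  qed
  finally show ?case using nn by simp
qed

lemma A_rec: "finite I \<Longrightarrow> ff (sum w I) (Suc (Suc m)) - Srec w (Suc (Suc m)) I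
   = (real (sum w I) - real (Suc m)) * (ff (sum w I) (Suc m) - Srec w (Suc m) I)
     + real (Suc m) * (\<Sum>b\<in>I. ff (w b) 2 * Srec w m (I - {b}))"
  using Rrec[of I w m] ff_Suc[of "sum w I" "Suc m"] by (simp add: algebra_simps)

lemma B2: "finite I \<Longrightarrow> ff (sum w I) m - Srec w m I \<le> alpha m * (\<Sum>b\<in>I. ff (w b) 2) * ff (sum w I - 2) (m - 2)"
proof -
  assume fin: "finite I"
  have Q: "ff (sum w I) (Suc m) - Srec w (Suc m) I \<le> alpha (Suc m) * (\<Sum>b\<in>I. ff (w b) 2) * ff (sum w I - 2) (Suc m - 2)" for m
  proof (induction m)
    case 0 then show ?case using fin by (simp add: ff_Suc of_nat_sum)
  next
    case (Suc m)
    define W where "W = sum w I"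
    define Q2 where "Q2 = (\<Sum>b\<in>I. ff (w b) 2)"
    have Q2nn: "0 \<le> Q2" unfolding Q2_def by (intro sum_nonneg ff_nonneg)
    have rhsnn: "0 \<le> alpha (Suc (Suc m)) * Q2 * ff (W - 2) m"
      using Q2nn alpha_nonneg ff_nonneg by simp
    show ?case
    proof (cases "W \<le> Suc m")
      case True
      then have "ff W (Suc (Suc m)) = 0" by (intro ff_zero) auto
      moreover have "0 \<le> Srec w (Suc (Suc m)) I" using B1[OF fin] by blast
      ultimately show ?thesis using rhsnn unfolding W_def Q2_def by simp
    next
      case False
      have t2: "(\<Sum>b\<in>I. ff (w b) 2 * Srec w m (I - {b})) \<le> Q2 * ff (W - 2) m"
        unfolding Q2_def sum_distrib_right
      proof (intro sum_mono)
        fix b assume b: "b \<in> I"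
        show "ff (w b) 2 * Srec w m (I - {b}) \<le> ff (w b) 2 * ff (W - 2) m"
        proof (cases "w b < 2")
          case True then show ?thesis by (simp add: ff2_zero)
        next
          case False
          have "sum w (I - {b}) = W - w b" using b fin by (simp add: sum_diff1_nat W_def)
          then have "sum w (I - {b}) \<le> W - 2" using False by simp
          then have "Srec w m (I - {b}) \<le> ff (W - 2) m"
            using B1[of "I - {b}" w m] fin ff_mono by (meson finite_Diff order.trans)
          then show ?thesis by (intro mult_left_mono ff_nonneg)
        qed
      qed
      have c1: "0 \<le> real W - real (Suc m)" using False by simp
      have IH: "ff W (Suc m) - Srec w (Suc m) I \<le> alpha (Suc m) * Q2 * ff (W - 2) (m - 1)"
        using Suc.IH unfolding W_def Q2_def by simp
      have key: "(real W - real (Suc m)) * (alpha (Suc m) * Q2 * ff (W - 2) (m - 1)) = alpha (Suc m) * Q2 * ff (W - 2) m"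
      proof (cases m)
        case 0 then show ?thesis by simp
      next
        case (Suc m')
        have "ff (W - 2) m = ff (W - 2) m' * (real (W - 2) - real m')" using Suc by (simp add: ff_Suc)
        moreover have "real (W - 2) - real m' = real W - real (Suc m)" using False Suc by (simp add: of_nat_diff)
        ultimately have e: "ff (W - 2) m = ff (W - 2) (m - 1) * (real W - real (Suc m))" using Suc by simp
        show ?thesis unfolding e by (simp add: algebra_simps)
      qed
      have "ff W (Suc (Suc m)) - Srec w (Suc (Suc m)) I
          = (real W - real (Suc m)) * (ff W (Suc m) - Srec w (Suc m) I) + real (Suc m) * (\<Sum>b\<in>I. ff (w b) 2 * Srec w m (I - {b}))"
        using A_rec[OF fin, of w m] unfolding W_def by simp
      also have "\<dots> \<le> (real W - real (Suc m)) * (alpha (Suc m) * Q2 * ff (W - 2) (m - 1)) + real (Suc m) * (Q2 * ff (W - 2) m)"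
        using IH t2 c1 by (intro add_mono mult_left_mono) auto
      also have "\<dots> = alpha (Suc (Suc m)) * Q2 * ff (W - 2) m"
        unfolding key alpha_Suc[of "Suc m"] by (simp add: algebra_simps)
      finally show ?thesis unfolding W_def Q2_def by simp
    qed
  qed
  show ?thesis
  proof (cases m)
    case 0 then show ?thesis by simp
  next
    case (Suc m') then show ?thesis using Q[of m'] by simp
  qed
qed

fun kap :: "nat \<Rightarrow> real" where
  "kap 0 = 0"
| "kap (Suc j) = kap j + real j * (real j - 1) + real j * alpha (j - 1)"

lemma kap_nonneg: "0 \<le> kap j"
proof (induction j)
  case 0 then show ?case by simp
next
  case (Suc j)
  have "0 \<le> real j * (real j - 1)" by (cases j) auto
  then show ?case using Suc alpha_nonneg[of "j - 1"] by simp
qed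

lemma ff3_eq: "ff x 3 = ff x 2 * (real x - 2)" by (simp add: ff_2 ff_3)

lemma T_lower:
  assumes fin: "finite I" and b: "b \<in> I"
  shows "ff (w b) 2 * Srec w m (I - {b}) \<ge> ff (w b) 2 * ff (sum w I - 2) m
      - ff (w b) 3 * real m * real (sum w I) ^ (m - 1)
      - ff (w b) 2 * (alpha m * (\<Sum>c\<in>I. ff (w c) 2) * real (sum w I) ^ (m - 2))"
proof (cases "w b < 2")
  case True
  then have "ff (w b) 2 = 0" "ff (w b) 3 = 0" by (auto intro!: ff_zero)
  then show ?thesis by simp
next
  case False
  define W where "W = sum w I"
  define Wb where "Wb = sum w (I - {b})"
  define Q2 where "Q2 = (\<Sum>c\<in>I. ff (w c) 2)"
  have Wb: "Wb = W - w b" using b fin by (simp add: sum_diff1_nat W_def Wb_def)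
  have wbW: "w b \<le> W" unfolding W_def using b fin by (metis member_le_sum zero_le)
  have Wb2: "Wb \<le> W - 2" using Wb False by simp
  have finb: "finite (I - {b})" using fin by simp
  have Q2b: "(\<Sum>c\<in>I - {b}. ff (w c) 2) \<le> Q2"
    unfolding Q2_def using fin by (intro sum_mono2) (auto intro: ff_nonneg)
  have "ff Wb m - Srec w m (I - {b}) \<le> alpha m * (\<Sum>c\<in>I - {b}. ff (w c) 2) * ff (Wb - 2) (m - 2)"
    using B2[OF finb, of w m] unfolding Wb_def .
  also have "\<dots> \<le> alpha m * Q2 * real W ^ (m - 2)"
  proof (intro mult_mono Q2b mult_left_mono alpha_nonneg)
    have "ff (Wb - 2) (m - 2) \<le> real (Wb - 2) ^ (m - 2)" by (rule ff_le_pow)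
    also have "\<dots> \<le> real W ^ (m - 2)" using Wb by (intro power_mono) auto
    finally show "ff (Wb - 2) (m - 2) \<le> real W ^ (m - 2)" .
  qed (auto intro!: ff_nonneg sum_nonneg mult_nonneg_nonneg alpha_nonneg simp: Q2_def)
  finally have s1: "Srec w m (I - {b}) \<ge> ff Wb m - alpha m * Q2 * real W ^ (m - 2)" by simp
  have "ff (W - 2) m - ff Wb m \<le> (real (W - 2) - real Wb) * real m * real (W - 2) ^ (m - 1)"
    by (rule ff_diff[OF Wb2])
  also have "\<dots> \<le> (real (w b) - 2) * real m * real W ^ (m - 1)"
  proof -
    have e: "real (W - 2) - real Wb = real (w b) - 2" using Wb wbW False by (simp add: of_nat_diff)
    have "real (W - 2) ^ (m - 1) \<le> real W ^ (m - 1)" by (intro power_mono) auto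
    then show ?thesis unfolding e using False by (intro mult_left_mono) auto
  qed
  finally have s2: "ff Wb m \<ge> ff (W - 2) m - (real (w b) - 2) * real m * real W ^ (m - 1)" by simp
  have "Srec w m (I - {b}) \<ge> ff (W - 2) m - (real (w b) - 2) * real m * real W ^ (m - 1) - alpha m * Q2 * real W ^ (m - 2)"
    using s1 s2 by simp
  then have "ff (w b) 2 * Srec w m (I - {b}) \<ge> ff (w b) 2 * (ff (W - 2) m - (real (w b) - 2) * real m * real W ^ (m - 1) - alpha m * Q2 * real W ^ (m - 2))"
    by (intro mult_left_mono ff_nonneg)
  then show ?thesis unfolding W_def[symmetric] Q2_def[symmetric] ff3_eq by (simp add: algebra_simps)
qed

lemma B3:
  assumes fin: "finite I" and Wpos: "0 < sum w I"
  shows "ff (sum w I) m - Srec w m I \<ge> alpha m * (\<Sum>b\<in>I. ff (w b) 2) * ff (sum w I - 2) (m - 2)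
     - kap m * ((\<Sum>b\<in>I. ff (w b) 3) * real (sum w I) ^ m / real (sum w I) ^ 3
              + (\<Sum>b\<in>I. ff (w b) 2)^2 * real (sum w I) ^ m / real (sum w I) ^ 4)"
proof -
  define W where "W = sum w I"
  define Q2 where "Q2 = (\<Sum>b\<in>I. ff (w b) 2)"
  define R3 where "R3 = (\<Sum>b\<in>I. ff (w b) 3)"
  define E where "E j = kap j * (R3 * real W ^ j / real W ^ 3 + Q2^2 * real W ^ j / real W ^ 4)" for j
  have Wp: "0 < real W" using Wpos unfolding W_def by (simp del: of_nat_sum)
  have Q2nn: "0 \<le> Q2" unfolding Q2_def by (intro sum_nonneg ff_nonneg)
  have R3nn: "0 \<le> R3" unfolding R3_def by (intro sum_nonneg ff_nonneg)
  have Enn: "0 \<le> E j" for j unfolding E_def using Wp Q2nn R3nn kap_nonneg by (intro mult_nonneg_nonneg add_nonneg_nonneg divide_nonneg_pos) auto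
  have Q: "ff W (Suc m) - Srec w (Suc m) I \<ge> alpha (Suc m) * Q2 * ff (W - 2) (Suc m - 2) - E (Suc m)" for m
  proof (induction m)
    case 0 then show ?case using fin by (simp add: ff_Suc of_nat_sum E_def W_def)
  next
    case (Suc m)
    show ?case
    proof (cases "W \<le> m")
      case True
      then have m1: "m \<ge> 1" using Wpos unfolding W_def by simp
      have z1: "ff (W - 2) m = 0" using True m1 by (intro ff_zero) auto
      have z2: "ff W (Suc (Suc m)) = 0" using True by (intro ff_zero) auto
      have "0 \<le> Srec w (Suc (Suc m)) I" "Srec w (Suc (Suc m)) I \<le> ff W (Suc (Suc m))"
        using B1[OF fin, of w "Suc (Suc m)"] unfolding W_def by auto
      then show ?thesis using z1 z2 Enn[of "Suc (Suc m)"] by simp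
    next
      case False
      have c1: "0 \<le> real W - real (Suc m)" using False by simp
      have T: "(\<Sum>b\<in>I. ff (w b) 2 * Srec w m (I - {b})) \<ge> Q2 * ff (W - 2) m - R3 * real m * real W ^ (m - 1) - alpha m * Q2^2 * real W ^ (m - 2)"
      proof -
        have "(\<Sum>b\<in>I. ff (w b) 2 * Srec w m (I - {b})) \<ge> (\<Sum>b\<in>I. ff (w b) 2 * ff (W - 2) m
          - ff (w b) 3 * real m * real W ^ (m - 1) - ff (w b) 2 * (alpha m * Q2 * real W ^ (m - 2)))"
          unfolding W_def Q2_def by (intro sum_mono T_lower[OF fin])
        also have "(\<Sum>b\<in>I. ff (w b) 2 * ff (W - 2) m
          - ff (w b) 3 * real m * real W ^ (m - 1) - ff (w b) 2 * (alpha m * Q2 * real W ^ (m - 2)))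
          = Q2 * ff (W - 2) m - R3 * real m * real W ^ (m - 1) - alpha m * Q2^2 * real W ^ (m - 2)"
          unfolding Q2_def R3_def sum_subtractf sum_distrib_right[symmetric] by (simp add: power2_eq_square algebra_simps)
        finally show ?thesis .
      qed
      have key: "(real W - real (Suc m)) * (alpha (Suc m) * Q2 * ff (W - 2) (m - 1)) = alpha (Suc m) * Q2 * ff (W - 2) m"
      proof (cases m)
        case 0 then show ?thesis by simp
      next
        case (Suc m')
        have "ff (W - 2) m = ff (W - 2) m' * (real (W - 2) - real m')" using Suc by (simp add: ff_Suc)
        moreover have "real (W - 2) - real m' = real W - real (Suc m)" using False Suc by (simp add: of_nat_diff)
        ultimately have e: "ff (W - 2) m = ff (W - 2) (m - 1) * (real W - real (Suc m))" using Suc by simp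
        show ?thesis unfolding e by (simp add: algebra_simps)
      qed
      have IH: "ff W (Suc m) - Srec w (Suc m) I \<ge> alpha (Suc m) * Q2 * ff (W - 2) (m - 1) - E (Suc m)"
        using Suc.IH by simp
      have p1: "real m * real W ^ (m - 1) = real m * (real W ^ (Suc (Suc m)) / real W ^ 3)"
      proof (cases m)
        case 0 then show ?thesis by simp
      next
        case (Suc m') 
        have "real W ^ (Suc (Suc m)) = real W ^ (m - 1) * real W ^ 3" unfolding power_add[symmetric] using Suc by (simp del: power_Suc) (simp add: eval_nat_numeral)
        then show ?thesis using Wp by simp
      qed
      have p2: "alpha m * real W ^ (m - 2) = alpha m * (real W ^ (Suc (Suc m)) / real W ^ 4)"
      proof (cases "m \<ge> 2")
        case False then have "m = 0 \<or> m = 1" by auto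
        then show ?thesis by auto
      next
        case True
        have "real W ^ (Suc (Suc m)) = real W ^ (m - 2) * real W ^ 4" unfolding power_add[symmetric] using True by (intro arg_cong[where f="power (real W)"]) simp
        then show ?thesis using Wp by simp
      qed
      have EW: "(real W - real (Suc m)) * E (Suc m) \<le> real W * E (Suc m)"
        using Enn[of "Suc m"] by (intro mult_right_mono) auto
      have WE: "real W * E (Suc m) = kap (Suc m) * (R3 * real W ^ Suc (Suc m) / real W ^ 3 + Q2^2 * real W ^ Suc (Suc m) / real W ^ 4)"
        unfolding E_def using Wp by (simp add: field_simps)
      have "ff W (Suc (Suc m)) - Srec w (Suc (Suc m)) I
          = (real W - real (Suc m)) * (ff W (Suc m) - Srec w (Suc m) I) + real (Suc m) * (\<Sum>b\<in>I. ff (w b) 2 * Srec w m (I - {b}))"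
        using A_rec[OF fin, of w m] unfolding W_def by simp
      also have "\<dots> \<ge> (real W - real (Suc m)) * (alpha (Suc m) * Q2 * ff (W - 2) (m - 1) - E (Suc m))
           + real (Suc m) * (Q2 * ff (W - 2) m - R3 * real m * real W ^ (m - 1) - alpha m * Q2^2 * real W ^ (m - 2))"
        using IH T c1 by (intro add_mono mult_left_mono) auto
      finally have "ff W (Suc (Suc m)) - Srec w (Suc (Suc m)) I \<ge>
          alpha (Suc m) * Q2 * ff (W - 2) m - (real W - real (Suc m)) * E (Suc m)
           + real (Suc m) * (Q2 * ff (W - 2) m) - real (Suc m) * R3 * (real m * real W ^ (m - 1))
           - real (Suc m) * Q2^2 * (alpha m * real W ^ (m - 2))"
        using key by (simp add: algebra_simps)
      then have "ff W (Suc (Suc m)) - Srec w (Suc (Suc m)) I \<ge>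
          alpha (Suc (Suc m)) * Q2 * ff (W - 2) m - real W * E (Suc m)
           - real (Suc m) * R3 * (real m * (real W ^ (Suc (Suc m)) / real W ^ 3))
           - real (Suc m) * Q2^2 * (alpha m * (real W ^ (Suc (Suc m)) / real W ^ 4))"
        using EW unfolding p1 p2 alpha_Suc[of "Suc m"] by (simp add: algebra_simps)
      moreover have "real W * E (Suc m) + real (Suc m) * R3 * (real m * (real W ^ (Suc (Suc m)) / real W ^ 3))
           + real (Suc m) * Q2^2 * (alpha m * (real W ^ (Suc (Suc m)) / real W ^ 4)) \<le> E (Suc (Suc m))"
      proof -
        define X3 where "X3 = real W ^ (Suc (Suc m)) / real W ^ 3"
        define X4 where "X4 = real W ^ (Suc (Suc m)) / real W ^ 4"
        have X: "0 \<le> X3" "0 \<le> X4" unfolding X3_def X4_def using Wp by auto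
        have kk: "kap (Suc (Suc m)) = kap (Suc m) + real (Suc m) * real m + real (Suc m) * alpha m"
          by (simp only: kap.simps(2)[of "Suc m"]) simp
        have e1: "E (Suc (Suc m)) = kap (Suc (Suc m)) * (R3 * X3 + Q2^2 * X4)"
          unfolding E_def X3_def X4_def by (simp add: algebra_simps)
        have e2: "real W * E (Suc m) = kap (Suc m) * (R3 * X3 + Q2^2 * X4)"
          unfolding WE X3_def X4_def by (simp add: algebra_simps)
        have "0 \<le> real (Suc m) * real m * (Q2^2 * X4) + real (Suc m) * alpha m * (R3 * X3)"
          using X R3nn alpha_nonneg[of m] by (intro add_nonneg_nonneg mult_nonneg_nonneg) auto
        then show ?thesis unfolding e1 e2 kk X3_def[symmetric] X4_def[symmetric] by (simp add: algebra_simps)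
      qed
      ultimately show ?thesis by simp
    qed
  qed
  show ?thesis
  proof (cases m)
    case 0 then show ?thesis by simp
  next
    case (Suc m') then show ?thesis using Q[of m'] unfolding E_def W_def Q2_def R3_def by simp
  qed
qed

lemma ff_add: "a \<le> x \<Longrightarrow> ff x (a + b) = ff x a * ff (x - a) b"
proof (induction b)
  case 0 then show ?case by simp
next
  case (Suc b)
  then show ?case by (simp add: ff_Suc of_nat_diff algebra_simps)
qed

lemma ff_lower_half:
  assumes "2 * n \<le> N"
  shows "real N ^ n \<le> 2 ^ n * ff N n"
proof -
  have "(\<Prod>j<n. real N / 2) \<le> ff N n"
    unfolding ff_def using assms by (intro prod_mono) auto
  then have "(real N / 2) ^ n \<le> ff N n" by simp
  then show ?thesis by (simp add: power_divide field_simps)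
qed

definition th3 :: "(nat \<Rightarrow> nat) \<Rightarrow> nat \<Rightarrow> real" where
  "th3 w N = (1 / ff N 3) * (\<Sum>i=1..N. ff (w i) 3)"
definition c2 :: "(nat \<Rightarrow> nat) \<Rightarrow> nat \<Rightarrow> real" where
  "c2 w N = (1 / ff N 2) * (\<Sum>i=1..N. ff (w i) 2)"

lemma c2_nonneg: "0 \<le> c2 w N" unfolding c2_def by (intro mult_nonneg_nonneg sum_nonneg ff_nonneg) (auto intro: ff_nonneg)
lemma th3_nonneg: "0 \<le> th3 w N" unfolding th3_def by (intro mult_nonneg_nonneg sum_nonneg ff_nonneg) (auto intro: ff_nonneg)

lemma w_le_N: "sum (w::nat\<Rightarrow>nat) {1..N} = N \<Longrightarrow> i \<in> {1..N} \<Longrightarrow> w i \<le> N"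
proof -
  assume a: "sum w {1..N} = N" "i \<in> {1..N}"
  have "w i \<le> sum w {1..N}" using a(2) by (metis finite_atLeastAtMost member_le_sum zero_le)
  then show ?thesis using a by simp
qed

lemma c2_le1:
  assumes tot: "sum w {1..N} = N" and N2: "2 \<le> N"
  shows "c2 w N \<le> 1"
proof -
  have "(\<Sum>i=1..N. ff (w i) 2) \<le> (\<Sum>i=1..N. real (w i) * (real N - 1))"
  proof (intro sum_mono)
    fix i assume i: "i \<in> {1..N}"
    have "w i \<le> N" using w_le_N[OF tot i] .
    then show "ff (w i) 2 \<le> real (w i) * (real N - 1)" unfolding ff_2 by (intro mult_left_mono) auto
  qed
  also have "\<dots> = ff N 2" using tot by (simp add: ff_2 sum_distrib_right[symmetric] del: of_nat_sum) (metis of_nat_sum)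
  finally show ?thesis unfolding c2_def using ff_pos[OF N2] by (simp add: field_simps)
qed

lemma c2_th3:
  assumes tot: "sum w {1..N} = N" and N3: "3 \<le> N" and eps: "0 < \<epsilon>"
  shows "c2 w N \<le> th3 w N / \<epsilon> + \<epsilon> + 1 / (real N - 1)"
proof -
  have p2: "0 < ff N 2" and p3: "0 < ff N 3" using N3 by (auto intro!: ff_pos)
  have e3: "ff N 3 = ff N 2 * (real N - 2)" by (simp add: ff3_eq)
  have each: "ff (w i) 2 / ff N 2 \<le> ff (w i) 3 / (ff N 3 * \<epsilon>) + real (w i) / real N * (\<epsilon> + 1 / (real N - 1))" for i
  proof (cases "real (w i) - 2 \<ge> \<epsilon> * (real N - 2)")
    case True
    have "ff (w i) 2 * (\<epsilon> * (real N - 2)) \<le> ff (w i) 2 * (real (w i) - 2)"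
      using True by (intro mult_left_mono ff_nonneg)
    then have "ff (w i) 2 * (\<epsilon> * (real N - 2)) \<le> ff (w i) 3" by (simp add: ff3_eq)
    then have "ff N 2 * (ff (w i) 2 * (\<epsilon> * (real N - 2))) \<le> ff N 2 * ff (w i) 3" using p2 by (intro mult_left_mono) auto
    then have "ff (w i) 2 / ff N 2 \<le> ff (w i) 3 / (ff N 3 * \<epsilon>)"
      using p2 eps N3 unfolding e3 by (simp add: field_simps)
    moreover have "0 \<le> real (w i) / real N * (\<epsilon> + 1 / (real N - 1))" using N3 eps by simp
    ultimately show ?thesis by simp
  next
    case False
    have a: "0 \<le> ff (w i) 3 / (ff N 3 * \<epsilon>)" using p3 eps by (simp add: ff_nonneg)
    have "ff (w i) 2 \<le> real (w i) * (\<epsilon> * (real N - 2) + 1)"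
    proof (cases "w i = 0")
      case True then show ?thesis by (simp add: ff_2)
    next
      case False'': False
      then show ?thesis unfolding ff_2 using False by (intro mult_left_mono) auto
    qed
    then have "ff (w i) 2 / ff N 2 \<le> real (w i) * (\<epsilon> * (real N - 2) + 1) / (real N * (real N - 1))"
      using p2 by (simp add: ff_2 divide_right_mono)
    also have "\<dots> \<le> real (w i) / real N * (\<epsilon> + 1 / (real N - 1))"
    proof -
      have "(\<epsilon> * (real N - 2) + 1) / (real N - 1) \<le> \<epsilon> + 1 / (real N - 1)"
        using N3 eps by (simp add: field_simps)
      then have "real (w i) / real N * ((\<epsilon> * (real N - 2) + 1) / (real N - 1)) \<le> real (w i) / real N * (\<epsilon> + 1 / (real N - 1))"
        by (intro mult_left_mono) auto
      then show ?thesis by (simp add: field_simps)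
    qed
    finally show ?thesis using a by simp
  qed
  have "c2 w N = (\<Sum>i=1..N. ff (w i) 2 / ff N 2)" unfolding c2_def by (simp add: sum_divide_distrib)
  also have "\<dots> \<le> (\<Sum>i=1..N. ff (w i) 3 / (ff N 3 * \<epsilon>) + real (w i) / real N * (\<epsilon> + 1 / (real N - 1)))"
    by (intro sum_mono each)
  also have "\<dots> = th3 w N / \<epsilon> + (\<Sum>i=1..N. real (w i)) / real N * (\<epsilon> + 1 / (real N - 1))"
    unfolding th3_def sum.distrib by (simp add: sum_divide_distrib sum_distrib_right)
  also have "(\<Sum>i=1..N. real (w i)) = real N" using tot by (metis of_nat_sum)
  finally show ?thesis using N3 by simp
qed

definition pp :: "nat \<Rightarrow> (nat \<Rightarrow> nat) \<Rightarrow> nat \<Rightarrow> real" where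
  "pp n w N = 1 - Srec w n {1..N} / ff N n"

lemma pr_pp: "pr n v N r = pp n (v r) N"
  unfolding pr_def pp_def Srec_list[OF finite_atLeastAtMost, symmetric] DL_def by simp

lemma pp_bounds:
  assumes tot: "sum w {1..N} = N" and N: "2 * n \<le> N" "4 \<le> N"
  shows "0 \<le> pp n w N" "pp n w N \<le> 1" "pp n w N \<le> alpha n * c2 w N"
        "alpha n * c2 w N - kap n * 2 ^ n * (th3 w N + (c2 w N)^2) \<le> pp n w N"
proof -
  have fin: "finite {1..N}" by simp
  have fp: "0 < ff N n" using N by (intro ff_pos) auto
  have f2: "0 < ff N 2" using N by (intro ff_pos) auto
  have f3: "0 < ff N 3" using N by (intro ff_pos) auto
  have S: "0 \<le> Srec w n {1..N}" "Srec w n {1..N} \<le> ff N n" using B1[OF fin, of w n] tot by auto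
  show "0 \<le> pp n w N" "pp n w N \<le> 1" unfolding pp_def using S fp by auto
  define Q2 where "Q2 = (\<Sum>b\<in>{1..N}. ff (w b) 2)"
  define R3 where "R3 = (\<Sum>b\<in>{1..N}. ff (w b) 3)"
  have ppe: "pp n w N = (ff N n - Srec w n {1..N}) / ff N n" unfolding pp_def using fp by (simp add: field_simps)
  have main: "alpha n * Q2 * ff (N - 2) (n - 2) / ff N n = alpha n * c2 w N"
  proof (cases "n < 2")
    case True then have "alpha n = 0" by (cases n) (auto simp: alpha_def)
    then show ?thesis by simp
  next
    case False
    have nn: "2 + (n - 2) = n" using False by simp
    have "ff N n = ff N 2 * ff (N - 2) (n - 2)" using ff_add[of 2 N "n - 2"] False N unfolding nn by simp
    moreover have "0 < ff (N - 2) (n - 2)" using N False by (intro ff_pos) auto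
    ultimately show ?thesis unfolding c2_def Q2_def using f2 by simp
  qed
  have "ff N n - Srec w n {1..N} \<le> alpha n * Q2 * ff (N - 2) (n - 2)"
    using B2[OF fin, of w n] tot unfolding Q2_def by simp
  then show "pp n w N \<le> alpha n * c2 w N" unfolding ppe main[symmetric] using fp by (simp add: divide_right_mono)
  have low: "ff N n - Srec w n {1..N} \<ge> alpha n * Q2 * ff (N - 2) (n - 2)
     - kap n * (R3 * real N ^ n / real N ^ 3 + Q2^2 * real N ^ n / real N ^ 4)"
    using B3[OF fin, of w n] tot N unfolding Q2_def R3_def by (simp del: of_nat_sum)
  have Np: "0 < real N" using N by simp
  have r1: "R3 / real N ^ 3 \<le> th3 w N"
  proof -
    have "ff N 3 \<le> real N ^ 3" by (rule ff_le_pow)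
    moreover have "0 \<le> R3" unfolding R3_def by (intro sum_nonneg ff_nonneg)
    ultimately have "R3 / real N ^ 3 \<le> R3 / ff N 3" using f3 Np by (intro divide_left_mono) auto
    then show ?thesis unfolding th3_def R3_def by simp
  qed
  have r2: "Q2^2 / real N ^ 4 \<le> (c2 w N)^2"
  proof -
    have "ff N 2 \<le> real N ^ 2" by (rule ff_le_pow)
    then have "(ff N 2)^2 \<le> (real N ^ 2)^2" using f2 by (intro power_mono) auto
    then have "(ff N 2)^2 \<le> real N ^ 4" by (simp add: power_mult[symmetric])
    moreover have "0 \<le> Q2^2" by simp
    ultimately have "Q2^2 / real N ^ 4 \<le> Q2^2 / (ff N 2)^2" using f2 Np by (intro divide_left_mono) auto
    then show ?thesis unfolding c2_def Q2_def by (simp add: power_divide)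
  qed
  have hp: "real N ^ n / ff N n \<le> 2 ^ n" using ff_lower_half[OF N(1)] fp by (simp add: field_simps)
  have "kap n * (R3 * real N ^ n / real N ^ 3 + Q2^2 * real N ^ n / real N ^ 4) / ff N n
      = kap n * (R3 / real N ^ 3 + Q2^2 / real N ^ 4) * (real N ^ n / ff N n)"
    by (simp add: field_simps)
  also have "\<dots> \<le> kap n * (th3 w N + (c2 w N)^2) * 2 ^ n"
    using r1 r2 hp kap_nonneg[of n] Np th3_nonneg[of w N]
    by (intro mult_mono mult_left_mono add_mono) (auto intro!: add_nonneg_nonneg th3_nonneg divide_nonneg_nonneg simp: R3_def Q2_def intro: sum_nonneg ff_nonneg)
  finally have "kap n * (R3 * real N ^ n / real N ^ 3 + Q2^2 * real N ^ n / real N ^ 4) / ff N n \<le> kap n * (th3 w N + (c2 w N)^2) * 2 ^ n" .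
  moreover have "pp n w N \<ge> alpha n * Q2 * ff (N - 2) (n - 2) / ff N n
     - kap n * (R3 * real N ^ n / real N ^ 3 + Q2^2 * real N ^ n / real N ^ 4) / ff N n"
    unfolding ppe using low fp by (simp add: diff_divide_distrib[symmetric] divide_right_mono)
  ultimately show "alpha n * c2 w N - kap n * 2 ^ n * (th3 w N + (c2 w N)^2) \<le> pp n w N"
    unfolding main by (simp add: algebra_simps)
qed

definition esym :: "(nat \<Rightarrow> real) \<Rightarrow> nat \<Rightarrow> nat set \<Rightarrow> real" where
  "esym c m B = (\<Sum>S\<in>{S. S \<subseteq> B \<and> card S = m}. \<Prod>x\<in>S. c x)"

lemma esym_0: "finite B \<Longrightarrow> esym c 0 B = 1"
proof -
  assume "finite B"
  then have "{S. S \<subseteq> B \<and> card S = 0} = {{}}" using finite_subset by (fastforce simp: card_eq_0_iff)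
  then show ?thesis unfolding esym_def by simp
qed

lemma esym_empty: "esym c (Suc m) {} = 0"
  unfolding esym_def by simp

lemma esym_insert:
  assumes fin: "finite B" and b: "b \<notin> B"
  shows "esym c (Suc m) (insert b B) = esym c (Suc m) B + c b * esym c m B"
proof -
  have eq: "{S. S \<subseteq> insert b B \<and> card S = Suc m} = {S. S \<subseteq> B \<and> card S = Suc m} \<union> insert b ` {S. S \<subseteq> B \<and> card S = m}"
  proof (rule set_eqI, rule iffI)
    fix S assume S: "S \<in> {S. S \<subseteq> insert b B \<and> card S = Suc m}"
    show "S \<in> {S. S \<subseteq> B \<and> card S = Suc m} \<union> insert b ` {S. S \<subseteq> B \<and> card S = m}"
    proof (cases "b \<in> S")
      case True
      have fS: "finite S" using S fin by (auto intro: finite_subset)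
      have "S = insert b (S - {b})" using True by auto
      moreover have "S - {b} \<subseteq> B" "card (S - {b}) = m" using S True fS by auto
      ultimately show ?thesis by blast
    next
      case False then show ?thesis using S by auto
    qed
  next
    fix S assume "S \<in> {S. S \<subseteq> B \<and> card S = Suc m} \<union> insert b ` {S. S \<subseteq> B \<and> card S = m}"
    then show "S \<in> {S. S \<subseteq> insert b B \<and> card S = Suc m}"
    proof
      assume "S \<in> {S. S \<subseteq> B \<and> card S = Suc m}" then show ?thesis by auto
    next
      assume "S \<in> insert b ` {S. S \<subseteq> B \<and> card S = m}"
      then obtain T where T: "T \<subseteq> B" "card T = m" "S = insert b T" by auto
      have "finite T" using T fin by (auto intro: finite_subset)
      moreover have "b \<notin> T" using T b by auto
      ultimately show ?thesis using T b by auto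
    qed
  qed
  have finP: "finite {S. S \<subseteq> B \<and> card S = k}" for k
    using fin by (rule finite_subset[rotated, OF finite_Pow_iff[THEN iffD2]]) auto
  have disj: "{S. S \<subseteq> B \<and> card S = Suc m} \<inter> insert b ` {S. S \<subseteq> B \<and> card S = m} = {}" using b by auto
  have inj: "inj_on (insert b) {S. S \<subseteq> B \<and> card S = m}"
  proof (rule inj_onI)
    fix S T assume ST: "S \<in> {S. S \<subseteq> B \<and> card S = m}" "T \<in> {S. S \<subseteq> B \<and> card S = m}" "insert b S = insert b T"
    then have "S = insert b S - {b}" "T = insert b T - {b}" using b by auto
    then show "S = T" using ST(3) by simp
  qed
  have "esym c (Suc m) (insert b B) = esym c (Suc m) B + (\<Sum>S\<in>insert b ` {S. S \<subseteq> B \<and> card S = m}. \<Prod>x\<in>S. c x)"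
    unfolding esym_def eq by (rule sum.union_disjoint) (use finP disj in auto)
  also have "(\<Sum>S\<in>insert b ` {S. S \<subseteq> B \<and> card S = m}. \<Prod>x\<in>S. c x) = (\<Sum>S\<in>{S. S \<subseteq> B \<and> card S = m}. \<Prod>x\<in>insert b S. c x)"
    by (rule sum.reindex[OF inj, unfolded comp_def])
  also have "\<dots> = (\<Sum>S\<in>{S. S \<subseteq> B \<and> card S = m}. c b * (\<Prod>x\<in>S. c x))"
  proof (intro sum.cong refl)
    fix S assume "S \<in> {S. S \<subseteq> B \<and> card S = m}"
    then have "finite S" "b \<notin> S" using fin b by (auto intro: finite_subset)
    then show "(\<Prod>x\<in>insert b S. c x) = c b * (\<Prod>x\<in>S. c x)" by simp
  qed
  finally show ?thesis unfolding esym_def sum_distrib_left by simp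
qed

lemma pow_lower: "0 \<le> p \<Longrightarrow> 0 \<le> (q::real) \<Longrightarrow> p ^ Suc m + real (Suc m) * q * p ^ m \<le> (p + q) ^ Suc m"
proof (induction m)
  case 0 then show ?case by simp
next
  case (Suc m)
  have "p ^ Suc (Suc m) + real (Suc (Suc m)) * q * p ^ Suc m
      \<le> (p + q) * (p ^ Suc m + real (Suc m) * q * p ^ m)"
    using Suc.prems by (simp add: algebra_simps)
  also have "\<dots> \<le> (p + q) * (p + q) ^ Suc m"
    using Suc by (intro mult_left_mono) auto
  finally show ?case by simp
qed

lemma esym_nonneg: "(\<And>x. x \<in> B \<Longrightarrow> 0 \<le> c x) \<Longrightarrow> 0 \<le> esym c m B"
  unfolding esym_def by (intro sum_nonneg prod_nonneg) auto

lemma esym_le: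
  assumes "finite B" "\<And>x. x \<in> B \<Longrightarrow> 0 \<le> c x"
  shows "esym c m B \<le> (sum c B) ^ m / fact m"
  using assms
proof (induction B arbitrary: m rule: finite_induct)
  case empty
  then show ?case by (cases m) (auto simp: esym_0 esym_empty)
next
  case (insert b B)
  show ?case
  proof (cases m)
    case 0 then show ?thesis using insert by (simp add: esym_0)
  next
    case (Suc m')
    have cb: "0 \<le> c b" using insert by auto
    have p: "0 \<le> sum c B" using insert by (intro sum_nonneg) auto
    have "esym c m (insert b B) = esym c (Suc m') B + c b * esym c m' B"
      using Suc insert by (simp add: esym_insert)
    also have "\<dots> \<le> (sum c B) ^ Suc m' / fact (Suc m') + c b * ((sum c B) ^ m' / fact m')"
      using insert.IH[of "Suc m'"] insert.IH[of m'] insert.prems cb by (intro add_mono mult_left_mono) auto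
    also have "\<dots> = ((sum c B) ^ Suc m' + real (Suc m') * c b * (sum c B) ^ m') / fact (Suc m')"
    proof -
      have F: "fact (Suc m') = real (Suc m') * (fact m' :: real)" by simp
      have "c b * ((sum c B) ^ m' / fact m') = real (Suc m') * c b * (sum c B) ^ m' / fact (Suc m')" unfolding F by simp
      then show ?thesis by (simp only: add_divide_distrib)
    qed
    also have "\<dots> \<le> (sum c B + c b) ^ Suc m' / fact (Suc m')"
      by (intro divide_right_mono pow_lower p cb) auto
    finally show ?thesis using Suc insert by (simp add: add.commute)
  qed
qed

lemma mono_bounded: "(\<forall>j<k. f j \<le> f (Suc j)) \<Longrightarrow> i \<le> j \<Longrightarrow> j \<le> k \<Longrightarrow> (f i :: 'a::order) \<le> f j"
proof (induction j)
  case 0 then show ?case by simp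
next
  case (Suc j)
  show ?case
  proof (cases "i = Suc j")
    case True then show ?thesis by simp
  next
    case False
    then have "f i \<le> f j" using Suc by auto
    also have "f j \<le> f (Suc j)" using Suc by auto
    finally show ?thesis .
  qed
qed

definition IIset :: "nat \<Rightarrow> (nat \<Rightarrow> nat) set" where
  "IIset k = {ii. ii 0 = 0 \<and> ii k = k \<and> (\<forall>j<k. ii j \<le> ii (Suc j)) \<and>
               (\<forall>j\<le>k. j \<le> ii j) \<and> (\<forall>j>k. ii j = 0)}"

lemma finite_IIset: "finite (IIset k)"
proof -
  have sub: "(\<lambda>ii. restrict ii {..k}) ` IIset k \<subseteq> PiE {..k} (\<lambda>_. {..k})"
  proof
    fix x assume "x \<in> (\<lambda>ii. restrict ii {..k}) ` IIset k"
    then obtain ii where ii: "ii \<in> IIset k" "x = restrict ii {..k}" by auto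
    have "\<And>j. j \<le> k \<Longrightarrow> ii j \<le> k"
    proof -
      fix j assume j: "j \<le> k"
      have "ii j \<le> ii k" by (rule mono_bounded[of k ii]) (use ii(1) j in \<open>auto simp: IIset_def\<close>)
      then show "ii j \<le> k" using ii(1) by (simp add: IIset_def)
    qed
    then show "x \<in> PiE {..k} (\<lambda>_. {..k})" using ii by auto
  qed
  have inj: "inj_on (\<lambda>ii. restrict ii {..k}) (IIset k)"
  proof (rule inj_onI)
    fix x y assume xy: "x \<in> IIset k" "y \<in> IIset k" "restrict x {..k} = restrict y {..k}"
    show "x = y"
    proof
      fix j show "x j = y j"
      proof (cases "j \<le> k")
        case True then show ?thesis using xy(3) by (metis atMost_iff restrict_apply')
      next
        case False then show ?thesis using xy(1,2) unfolding IIset_def by auto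
      qed
    qed
  qed
  have "finite ((\<lambda>ii. restrict ii {..k}) ` IIset k)"
    by (rule finite_subset[OF sub]) (simp add: finite_PiE)
  then show ?thesis using inj by (rule finite_imageD)
qed

lemma disc_bound:
  fixes c :: "nat \<Rightarrow> real" and L :: "nat \<Rightarrow> nat"
  assumes cnn: "\<And>r. 0 \<le> c r" and L0: "L 0 = 0" and Lmono: "\<forall>j<k. L j \<le> L (Suc j)"
  shows "(\<Sum>rs\<in>{rs. length rs = k \<and> sorted_wrt (<) rs \<and> (\<forall>j<k. 1 \<le> rs ! j \<and> rs ! j \<le> L (Suc j))}. \<Prod>j<k. c (rs ! j))
     \<le> (\<Sum>ii\<in>IIset k. \<Prod>j=1..k. (sum c {L (j - 1)<..L j}) ^ (ii j - ii (j - 1)) / fact (ii j - ii (j - 1)))"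
proof -
  define RS where "RS = {rs. length rs = k \<and> sorted_wrt (<) rs \<and> (\<forall>j<k. 1 \<le> rs ! j \<and> rs ! j \<le> L (Suc j))}"
  define blk where "blk j = {L (j - 1)<..L j}" for j
  define iiF where "iiF rs = (\<lambda>j. if j \<le> k then card (set rs \<inter> {..L j}) else 0)" for rs :: "nat list"
  define f where "f rs = (iiF rs, restrict (\<lambda>j. set rs \<inter> blk j) {1..k})" for rs
  define F where "F ii j = {S. S \<subseteq> blk j \<and> card S = ii j - ii (j - 1)}" for ii :: "nat \<Rightarrow> nat" and j
  define Tg where "Tg = (SIGMA ii:IIset k. PiE {1..k} (F ii))"
  define g where "g = (\<lambda>(ii :: nat \<Rightarrow> nat, S :: nat \<Rightarrow> nat set). \<Prod>j\<in>{1..k}. \<Prod>x\<in>S j. c x)"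
  have Lm: "\<And>i j. i \<le> j \<Longrightarrow> j \<le> k \<Longrightarrow> L i \<le> L j" using mono_bounded[of k L] Lmono by blast
  have finblk: "finite (blk j)" for j unfolding blk_def by simp
  have finF: "finite (F ii j)" for ii j
    unfolding F_def by (rule finite_subset[of _ "Pow (blk j)"]) (auto simp: finblk)
  have RSp: "distinct rs" "sorted rs" "length rs = k" "set rs \<subseteq> {1..L k}" if "rs \<in> RS" for rs
  proof -
    show "distinct rs" "sorted rs" "length rs = k" using that unfolding RS_def by (auto simp: strict_sorted_iff)
    show "set rs \<subseteq> {1..L k}"
    proof
      fix x assume "x \<in> set rs"
      then obtain j where j: "j < length rs" "x = rs ! j" by (auto simp: in_set_conv_nth)
      then have "1 \<le> x" "x \<le> L (Suc j)" using that unfolding RS_def by auto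
      moreover have "L (Suc j) \<le> L k" using j that by (intro Lm) (auto simp: RS_def)
      ultimately show "x \<in> {1..L k}" by auto
    qed
  qed
  have cover: "\<exists>j\<in>{1..k}. x \<in> blk j" if x: "x \<in> {1..L k}" for x
  proof -
    define j where "j = (LEAST j. x \<le> L j)"
    have xj: "x \<le> L j" unfolding j_def by (rule LeastI[of _ k]) (use x in auto)
    have jk: "j \<le> k" unfolding j_def by (rule Least_le) (use x in auto)
    have j0: "j \<noteq> 0" proof assume "j = 0" then show False using xj x L0 by auto qed
    have "\<not> x \<le> L (j - 1)" unfolding j_def by (rule not_less_Least) (use j0 j_def in auto)
    then have "j \<in> {1..k} \<and> x \<in> blk j" using xj jk j0 unfolding blk_def by auto
    then show ?thesis by blast
  qed
  have disj: "blk i \<inter> blk j = {}" if "i \<in> {1..k}" "j \<in> {1..k}" "i \<noteq> j" for i j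
  proof -
    have H: "blk a \<inter> blk b = {}" if ab: "a < b" "b \<le> k" for a b
    proof -
      have "L a \<le> L (b - 1)" using ab by (intro Lm) auto
      then show ?thesis unfolding blk_def by auto
    qed
    show ?thesis
    proof (cases "i < j")
      case True then show ?thesis using H[of i j] that by auto
    next
      case False then have "j < i" using that(3) by auto
      then show ?thesis using H[of j i] that by auto
    qed
  qed
  have setU: "set rs = (\<Union>j\<in>{1..k}. set rs \<inter> blk j)" if "rs \<in> RS" for rs
    using cover RSp(4)[OF that] by blast
  have split: "card (set rs \<inter> {..L j}) = card (set rs \<inter> {..L (j - 1)}) + card (set rs \<inter> blk j)"
    if "j \<in> {1..k}" for rs j
  proof -
    have "L (j - 1) \<le> L j" using that by (intro Lm) auto
    then have "set rs \<inter> {..L j} = (set rs \<inter> {..L (j - 1)}) \<union> (set rs \<inter> blk j)"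
      "(set rs \<inter> {..L (j - 1)}) \<inter> (set rs \<inter> blk j) = {}" unfolding blk_def by auto
    then show ?thesis by (simp add: card_Un_disjoint)
  qed
  have iiII: "iiF rs \<in> IIset k" if rs: "rs \<in> RS" for rs
  proof -
    have a: "iiF rs 0 = 0"
    proof -
      have "set rs \<inter> {..L 0} = {}" using RSp(4)[OF rs] L0 by auto
      then show ?thesis unfolding iiF_def by simp
    qed
    have b: "iiF rs k = k"
    proof -
      have "set rs \<inter> {..L k} = set rs" using RSp(4)[OF rs] by auto
      then show ?thesis unfolding iiF_def using RSp[OF rs] by (simp add: distinct_card)
    qed
    have c: "iiF rs j \<le> iiF rs (Suc j)" if "j < k" for j
    proof -
      have "L j \<le> L (Suc j)" using that Lmono by auto
      then have "set rs \<inter> {..L j} \<subseteq> set rs \<inter> {..L (Suc j)}" by auto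
      then show ?thesis unfolding iiF_def using that by (simp add: card_mono)
    qed
    have d: "j \<le> iiF rs j" if "j \<le> k" for j
    proof (cases j)
      case 0 then show ?thesis by simp
    next
      case (Suc j')
      have sub: "(nth rs) ` {..<j} \<subseteq> set rs \<inter> {..L j}"
      proof
        fix x assume "x \<in> (nth rs) ` {..<j}"
        then obtain i where i: "i < j" "x = rs ! i" by auto
        have "rs ! i \<le> rs ! j'" using i Suc RSp[OF rs] that by (intro sorted_nth_mono) auto
        also have "rs ! j' \<le> L j" using rs Suc that unfolding RS_def by auto
        finally show "x \<in> set rs \<inter> {..L j}" using i RSp[OF rs] that by auto
      qed
      have "card ((nth rs) ` {..<j}) = j"
        using RSp[OF rs] that by (subst card_image) (auto intro!: inj_on_nth)
      moreover have "card ((nth rs) ` {..<j}) \<le> card (set rs \<inter> {..L j})" by (rule card_mono[OF _ sub]) auto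
      ultimately show ?thesis unfolding iiF_def using that by simp
    qed
    show ?thesis unfolding IIset_def using a b c d by (auto simp: iiF_def)
  qed
  have fT: "f ` RS \<subseteq> Tg"
  proof
    fix y assume "y \<in> f ` RS"
    then obtain rs where rs: "rs \<in> RS" "y = f rs" by auto
    have "restrict (\<lambda>j. set rs \<inter> blk j) {1..k} \<in> PiE {1..k} (F (iiF rs))"
    proof (rule restrict_PiE_iff[THEN iffD2], intro ballI)
      fix j assume j: "j \<in> {1..k}"
      have "iiF rs j - iiF rs (j - 1) = card (set rs \<inter> blk j)"
        using split[OF j, of rs] j unfolding iiF_def by auto
      then show "set rs \<inter> blk j \<in> F (iiF rs) j" unfolding F_def by auto
    qed
    then show "y \<in> Tg" unfolding Tg_def rs(2) f_def using iiII[OF rs(1)] by auto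
  qed
  have inj: "inj_on f RS"
  proof (rule inj_onI)
    fix xs ys assume xs: "xs \<in> RS" and ys: "ys \<in> RS" and e: "f xs = f ys"
    then have R: "restrict (\<lambda>j. set xs \<inter> blk j) {1..k} = restrict (\<lambda>j. set ys \<inter> blk j) {1..k}"
      unfolding f_def by simp
    have "\<And>j. j \<in> {1..k} \<Longrightarrow> set xs \<inter> blk j = set ys \<inter> blk j"
    proof -
      fix j assume j: "j \<in> {1..k}"
      have "restrict (\<lambda>j. set xs \<inter> blk j) {1..k} j = restrict (\<lambda>j. set ys \<inter> blk j) {1..k} j" using R by simp
      then show "set xs \<inter> blk j = set ys \<inter> blk j" using j by simp
    qed
    then have "set xs = set ys" using setU[OF xs] setU[OF ys] by auto
    then show "xs = ys" using RSp[OF xs] RSp[OF ys] by (intro sorted_distinct_set_unique) auto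
  qed
  have wt: "(\<Prod>j<k. c (rs ! j)) = g (f rs)" if rs: "rs \<in> RS" for rs
  proof -
    have im: "(nth rs) ` {..<k} = set rs" using RSp(3)[OF rs] by (auto simp: in_set_conv_nth)
    have "(\<Prod>j<k. c (rs ! j)) = (\<Prod>x\<in>set rs. c x)"
      unfolding im[symmetric] using RSp[OF rs] by (subst prod.reindex) (auto intro!: inj_on_nth)
    also have "\<dots> = (\<Prod>j\<in>{1..k}. \<Prod>x\<in>set rs \<inter> blk j. c x)"
      by (subst setU[OF rs], rule prod.UNION_disjoint) (use disj in blast)+
    also have "\<dots> = g (f rs)" unfolding g_def f_def by simp
    finally show ?thesis .
  qed
  have finT: "finite Tg" unfolding Tg_def
    by (intro finite_SigmaI finite_IIset finite_PiE) (auto simp: finF)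
  have gnn: "0 \<le> g x" for x unfolding g_def by (auto intro!: prod_nonneg cnn simp: case_prod_unfold)
  have "(\<Sum>rs\<in>RS. \<Prod>j<k. c (rs ! j)) = (\<Sum>rs\<in>RS. g (f rs))" by (intro sum.cong refl wt)
  also have "\<dots> = (\<Sum>y\<in>f ` RS. g y)" by (rule sum.reindex[OF inj, symmetric, unfolded comp_def])
  also have "\<dots> \<le> (\<Sum>y\<in>Tg. g y)" by (rule sum_mono2[OF finT fT]) (simp add: gnn)
  also have "\<dots> = (\<Sum>ii\<in>IIset k. \<Sum>S\<in>PiE {1..k} (F ii). \<Prod>j\<in>{1..k}. \<Prod>x\<in>S j. c x)"
    unfolding Tg_def g_def by (subst sum.Sigma) (auto simp: finite_IIset finite_PiE finF)
  also have "\<dots> = (\<Sum>ii\<in>IIset k. \<Prod>j\<in>{1..k}. esym c (ii j - ii (j - 1)) (blk j))"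
    unfolding esym_def F_def by (intro sum.cong refl, subst prod_sum_PiE) (auto simp: finblk intro!: finite_subset[of _ "Pow _"])
  also have "\<dots> \<le> (\<Sum>ii\<in>IIset k. \<Prod>j=1..k. (sum c (blk j)) ^ (ii j - ii (j - 1)) / fact (ii j - ii (j - 1)))"
    by (intro sum_mono prod_mono conjI esym_nonneg esym_le) (auto simp: cnn finblk)
  finally show ?thesis unfolding RS_def blk_def .
qed

definition Cs :: "(nat \<Rightarrow> nat \<Rightarrow> nat) \<Rightarrow> nat \<Rightarrow> nat \<Rightarrow> real" where
  "Cs v N s = (\<Sum>r=1..s. cN v N r)"

lemma cN_c2: "cN v N r = c2 (v r) N" unfolding cN_def c2_def by simp

lemma sum_split_gt: "a \<le> b \<Longrightarrow> sum (f::nat\<Rightarrow>real) {1..b} = sum f {1..a} + sum f {a<..(b::nat)}"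
proof (induction b)
  case 0 then show ?case by simp
next
  case (Suc b)
  show ?case
  proof (cases "a = Suc b")
    case True then show ?thesis by simp
  next
    case False
    then have ab: "a \<le> b" using Suc by simp
    have "{a<..Suc b} = insert (Suc b) {a<..b}" using ab by auto
    then have "sum f {a<..Suc b} = f (Suc b) + sum f {a<..b}" by simp
    moreover have "sum f {1..Suc b} = f (Suc b) + sum f {1..b}" by (simp add: add.commute)
    ultimately show ?thesis using Suc.IH[OF ab] by (simp add: algebra_simps)
  qed
qed

lemma tau_fin_props:
  assumes "tauN v N u = enat L"
  shows "u \<le> Cs v N L" "\<And>s. s < L \<Longrightarrow> Cs v N s < u" "L = (LEAST s. u \<le> Cs v N s)"
proof -
  have ex: "\<exists>s. u \<le> Cs v N s" and L: "L = (LEAST s. u \<le> Cs v N s)"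
    using assms unfolding tauN_def Cs_def by (auto split: if_splits)
  show "u \<le> Cs v N L" unfolding L using ex by (rule LeastI_ex)
  show "\<And>s. s < L \<Longrightarrow> Cs v N s < u" unfolding L using not_less_Least by (metis not_le)
  show "L = (LEAST s. u \<le> Cs v N s)" by (rule L)
qed

lemma tau_smaller:
  assumes "tauN v N T = enat L" "u \<le> T"
  shows "tauN v N u = enat (LEAST s. u \<le> Cs v N s)" "(LEAST s. u \<le> Cs v N s) \<le> L"
proof -
  have "u \<le> Cs v N L" using tau_fin_props(1)[OF assms(1)] assms(2) by simp
  then show "tauN v N u = enat (LEAST s. u \<le> Cs v N s)" unfolding tauN_def Cs_def by auto
  show "(LEAST s. u \<le> Cs v N s) \<le> L" by (rule Least_le) fact
qed

definition Vm :: "nat \<Rightarrow> (nat \<Rightarrow> real) \<Rightarrow> real \<Rightarrow> real" where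
  "Vm k tt m = (\<Sum>ii\<in>IIset k. \<Prod>j=1..k. (tt j - tt (j - 1) + m) ^ (ii j - ii (j - 1)) / fact (ii j - ii (j - 1)))"

lemma rhs_Vm: "rhs n k tt T = alpha n ^ k * exp (- alpha n * T) * Vm k tt 0"
  unfolding rhs_def Vm_def IIset_def by simp

lemma Cs_Suc: "Cs v N (Suc s) = Cs v N s + cN v N (Suc s)"
  unfolding Cs_def by simp

lemma det_bound:
  fixes v :: "nat \<Rightarrow> nat \<Rightarrow> nat" and tt :: "nat \<Rightarrow> real"
  assumes tot: "\<And>t. 1 \<le> t \<Longrightarrow> sum (v t) {1..N} = N"
    and N: "2 * n \<le> N" "4 \<le> N"
    and t0: "tt 0 = 0" and tmono: "\<And>j. j < k \<Longrightarrow> tt j \<le> tt (Suc j)" and tT: "tt k \<le> T"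
    and tau: "tauN v N T = enat L"
    and m0: "0 \<le> m" and cm: "\<And>r. r \<in> {1..L} \<Longrightarrow> cN v N r \<le> m"
  shows "lhs_rv n v N k tt T \<le> alpha n ^ k * Vm k tt m"
    "(\<Sum>r=1..L. th3 (v r) N) \<le> \<eta> \<Longrightarrow> lhs_rv n v N k tt T \<le> alpha n ^ k * exp (- alpha n * T)
        * exp (alpha n * real k * m + kap n * 2 ^ n * (\<eta> + m * (T + m))) * Vm k tt m"
proof -
  define c where "c r = cN v N r" for r
  define p where "p r = pr n v N r" for r
  define K where "K = kap n * 2 ^ n"
  define Lj where "Lj j = (LEAST s. tt j \<le> Cs v N s)" for j
  define RS where "RS = {rs. length rs = k \<and> sorted_wrt (<) rs \<and> (\<forall>j<k. 1 \<le> rs ! j \<and> rs ! j \<le> Lj (Suc j))}"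
  have ttm: "\<And>i j. i \<le> j \<Longrightarrow> j \<le> k \<Longrightarrow> tt i \<le> tt j" using mono_bounded[of k tt] tmono by blast
  have ttnn: "0 \<le> tt j" if "j \<le> k" for j using ttm[of 0 j] that t0 by simp
  have ttT: "tt j \<le> T" if "j \<le> k" for j using ttm[of j k] that tT by simp
  have Tnn: "0 \<le> T" using ttnn[of k] tT by simp
  have Knn: "0 \<le> K" unfolding K_def using kap_nonneg by simp
  have al: "0 \<le> alpha n" by (rule alpha_nonneg)
  have cnn: "0 \<le> c r" for r unfolding c_def cN_c2 by (rule c2_nonneg)
  have pb: "0 \<le> p r \<and> p r \<le> 1 \<and> p r \<le> alpha n * c r \<and> alpha n * c r - K * (th3 (v r) N + (c r)^2) \<le> p r"
    if "1 \<le> r" for r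
    using pp_bounds[OF tot[OF that] N] unfolding p_def c_def pr_pp cN_c2 K_def by auto
  have Ljtau: "tauN v N (tt j) = enat (Lj j)" "Lj j \<le> L" if "j \<le> k" for j
    using tau_smaller[OF tau ttT[OF that]] unfolding Lj_def by auto
  have L0: "Lj 0 = 0" unfolding Lj_def t0 by (rule Least_eq_0) (simp add: Cs_def)
  have Lmono: "\<forall>j<k. Lj j \<le> Lj (Suc j)"
  proof (intro allI impI)
    fix j assume j: "j < k"
    have "tt (Suc j) \<le> Cs v N (Lj (Suc j))" using tau_fin_props(1)[OF Ljtau(1)[of "Suc j"]] j by simp
    then have "tt j \<le> Cs v N (Lj (Suc j))" using tmono[OF j] by simp
    then show "Lj j \<le> Lj (Suc j)" unfolding Lj_def[of j] by (rule Least_le)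
  qed
  have CsLe: "Cs v N M \<le> u + m" if "tauN v N u = enat M" "M \<le> L" "0 \<le> u" for u M
  proof (cases M)
    case 0 then show ?thesis using that m0 by (simp add: Cs_def)
  next
    case (Suc M')
    have "Cs v N M' < u" using tau_fin_props(2)[OF that(1)] Suc by simp
    moreover have "cN v N M \<le> m" using cm[of M] Suc that(2) by simp
    ultimately show ?thesis using Suc by (simp add: Cs_Suc)
  qed
  have CL: "T \<le> Cs v N L" "Cs v N L \<le> T + m"
    using tau_fin_props(1)[OF tau] CsLe[OF tau _ Tnn] by auto
  have theL: "the_enat (tauN v N T) = L" using tau by simp
  have setEq: "{rs. length rs = k \<and> sorted_wrt (<) rs \<and>
               (\<forall>j<k. 1 \<le> rs ! j \<and> enat (rs ! j) \<le> tauN v N (tt (Suc j)))} = RS"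
    unfolding RS_def using Ljtau(1) by (auto simp: Suc_le_eq)
  have lhs_eq: "lhs_rv n v N k tt T = (\<Sum>rs\<in>RS. (\<Prod>j<k. p (rs ! j)) * (\<Prod>r\<in>{1..L} - set rs. (1 - p r)))"
    unfolding lhs_rv_def setEq theL p_def by simp
  have RSp: "distinct rs" "set rs \<subseteq> {1..L}" "card (set rs) = k" "\<And>j. j < k \<Longrightarrow> 1 \<le> rs ! j" if "rs \<in> RS" for rs
  proof -
    show "distinct rs" using that unfolding RS_def by (auto simp: strict_sorted_iff)
    then show "card (set rs) = k" using that unfolding RS_def by (simp add: distinct_card)
    show "\<And>j. j < k \<Longrightarrow> 1 \<le> rs ! j" using that unfolding RS_def by auto
    show "set rs \<subseteq> {1..L}"
    proof
      fix x assume "x \<in> set rs"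
      then obtain j where j: "j < length rs" "x = rs ! j" by (auto simp: in_set_conv_nth)
      then have "1 \<le> x" "x \<le> Lj (Suc j)" "Suc j \<le> k" using that unfolding RS_def by auto
      then show "x \<in> {1..L}" using Ljtau(2)[of "Suc j"] by auto
    qed
  qed
  have P1: "(\<Prod>j<k. p (rs ! j)) \<le> alpha n ^ k * (\<Prod>j<k. c (rs ! j))" if rs: "rs \<in> RS" for rs
  proof -
    have "(\<Prod>j<k. p (rs ! j)) \<le> (\<Prod>j<k. alpha n * c (rs ! j))"
      using pb RSp(4)[OF rs] by (intro prod_mono) auto
    also have "\<dots> = alpha n ^ k * (\<Prod>j<k. c (rs ! j))" by (simp add: prod.distrib)
    finally show ?thesis .
  qed
  have Pnn: "0 \<le> (\<Prod>j<k. c (rs ! j))" for rs by (intro prod_nonneg) (auto simp: cnn)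
  have Q1: "(\<Prod>r\<in>{1..L} - set rs. (1 - p r)) \<le> 1" "0 \<le> (\<Prod>r\<in>{1..L} - set rs. (1 - p r))" for rs
    using pb by (auto intro!: prod_le_1 prod_nonneg)
  have blk: "sum c {Lj (j - 1)<..Lj j} \<le> tt j - tt (j - 1) + m" "0 \<le> sum c {Lj (j - 1)<..Lj j}"
    if j: "j \<in> {1..k}" for j
  proof -
    have le: "Lj (j - 1) \<le> Lj j" using Lmono j by (metis Suc_diff_1 atLeastAtMost_iff diff_less le_less_trans less_numeral_extra(1) order_less_le_trans)
    have "sum c {Lj (j - 1)<..Lj j} = Cs v N (Lj j) - Cs v N (Lj (j - 1))"
      unfolding Cs_def c_def using sum_split_gt[OF le, of "\<lambda>r. cN v N r"] by simp
    moreover have "Cs v N (Lj j) \<le> tt j + m" using CsLe[OF Ljtau(1) Ljtau(2) ttnn] j by auto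
    moreover have "tt (j - 1) \<le> Cs v N (Lj (j - 1))" using tau_fin_props(1)[OF Ljtau(1)[of "j - 1"]] j by auto
    ultimately show "sum c {Lj (j - 1)<..Lj j} \<le> tt j - tt (j - 1) + m" by simp
    show "0 \<le> sum c {Lj (j - 1)<..Lj j}" by (intro sum_nonneg cnn)
  qed
  have VV: "(\<Sum>rs\<in>RS. \<Prod>j<k. c (rs ! j)) \<le> Vm k tt m"
  proof -
    have "(\<Sum>rs\<in>RS. \<Prod>j<k. c (rs ! j))
        \<le> (\<Sum>ii\<in>IIset k. \<Prod>j=1..k. (sum c {Lj (j - 1)<..Lj j}) ^ (ii j - ii (j - 1)) / fact (ii j - ii (j - 1)))"
      unfolding RS_def by (rule disc_bound[OF cnn L0 Lmono])
    also have "\<dots> \<le> Vm k tt m"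
      unfolding Vm_def using blk
      by (intro sum_mono prod_mono conjI divide_right_mono power_mono divide_nonneg_nonneg zero_le_power) auto
    finally show ?thesis .
  qed
  have Vnn: "0 \<le> (\<Sum>rs\<in>RS. \<Prod>j<k. c (rs ! j))" by (intro sum_nonneg Pnn)
  show "lhs_rv n v N k tt T \<le> alpha n ^ k * Vm k tt m"
  proof -
    have "lhs_rv n v N k tt T \<le> (\<Sum>rs\<in>RS. alpha n ^ k * (\<Prod>j<k. c (rs ! j)) * 1)"
      unfolding lhs_eq using P1 Q1 pb RSp(4)
      by (intro sum_mono mult_mono prod_nonneg) (auto intro!: mult_nonneg_nonneg zero_le_power al Pnn)
    also have "\<dots> = alpha n ^ k * (\<Sum>rs\<in>RS. \<Prod>j<k. c (rs ! j))" by (simp add: sum_distrib_left)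
    also have "\<dots> \<le> alpha n ^ k * Vm k tt m" using VV al by (intro mult_left_mono) auto
    finally show ?thesis .
  qed
  assume eta: "(\<Sum>r=1..L. th3 (v r) N) \<le> \<eta>"
  define EE where "EE = alpha n * real k * m + K * (\<eta> + m * (T + m))"
  have Q2: "(\<Prod>r\<in>{1..L} - set rs. (1 - p r)) \<le> exp (- alpha n * T) * exp EE" if rs: "rs \<in> RS" for rs
  proof -
    define A where "A = {1..L} - set rs"
    have finA: "finite A" unfolding A_def by simp
    have sub: "set rs \<subseteq> {1..L}" by (rule RSp(2)[OF rs])
    have "(\<Prod>r\<in>A. (1 - p r)) \<le> (\<Prod>r\<in>A. exp (- p r))"
    proof (intro prod_mono conjI)
      fix r assume "r \<in> A"
      then have "1 \<le> r" unfolding A_def by auto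
      then show "0 \<le> 1 - p r" using pb by auto
      show "1 - p r \<le> exp (- p r)" using exp_ge_add_one_self[of "- p r"] by simp
    qed
    also have "\<dots> = exp (- (\<Sum>r\<in>A. p r))" using finA by (subst sum_negf[symmetric], subst exp_sum) auto
    also have "\<dots> \<le> exp (- alpha n * T + EE)"
    proof -
      have s1: "(\<Sum>r\<in>A. p r) \<ge> (\<Sum>r\<in>A. alpha n * c r - K * (th3 (v r) N + (c r)^2))"
        using pb unfolding A_def by (intro sum_mono) auto
      have sA: "(\<Sum>r\<in>A. c r) = Cs v N L - (\<Sum>r\<in>set rs. c r)"
        using sum.subset_diff[OF sub, of c] unfolding A_def Cs_def c_def by simp
      have sr: "(\<Sum>r\<in>set rs. c r) \<le> real k * m"
      proof -
        have "\<And>i. i \<in> set rs \<Longrightarrow> c i \<le> m" using cm sub unfolding c_def by auto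
        then have "(\<Sum>r\<in>set rs. c r) \<le> real (card (set rs)) * m" using sum_bounded_above[of "set rs" c m] by simp
        then show ?thesis using RSp(3)[OF rs] by simp
      qed
      have s3: "(\<Sum>r\<in>A. th3 (v r) N + (c r)^2) \<le> (\<Sum>r=1..L. th3 (v r) N + (c r)^2)"
        unfolding A_def by (intro sum_mono2) (auto intro!: add_nonneg_nonneg th3_nonneg)
      have s4: "(\<Sum>r=1..L. (c r)^2) \<le> (\<Sum>r=1..L. m * c r)"
      proof (intro sum_mono)
        fix r assume "r \<in> {1..L}"
        then have "c r \<le> m" using cm unfolding c_def by auto
        then show "(c r)^2 \<le> m * c r" using cnn[of r] by (simp add: power2_eq_square mult_right_mono)
      qed
      have s5: "(\<Sum>r=1..L. m * c r) = m * Cs v N L" unfolding Cs_def c_def by (simp add: sum_distrib_left)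
      have "(\<Sum>r\<in>A. th3 (v r) N + (c r)^2) \<le> \<eta> + m * (T + m)"
      proof -
        have "(\<Sum>r=1..L. th3 (v r) N + (c r)^2) = (\<Sum>r=1..L. th3 (v r) N) + (\<Sum>r=1..L. (c r)^2)"
          by (simp add: sum.distrib)
        also have "\<dots> \<le> \<eta> + m * Cs v N L" using eta s4 s5 by simp
        also have "\<dots> \<le> \<eta> + m * (T + m)" using CL m0 by (simp add: mult_left_mono)
        finally show ?thesis using s3 by simp
      qed
      then have "K * (\<Sum>r\<in>A. th3 (v r) N + (c r)^2) \<le> K * (\<eta> + m * (T + m))"
        using Knn by (intro mult_left_mono)
      moreover have "alpha n * (\<Sum>r\<in>A. c r) \<ge> alpha n * (T - real k * m)"
        using sA sr CL al by (intro mult_left_mono) auto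
      moreover have "(\<Sum>r\<in>A. alpha n * c r - K * (th3 (v r) N + (c r)^2))
          = alpha n * (\<Sum>r\<in>A. c r) - K * (\<Sum>r\<in>A. th3 (v r) N + (c r)^2)"
        by (simp add: sum_subtractf sum_distrib_left)
      ultimately have "- (\<Sum>r\<in>A. p r) \<le> - alpha n * T + EE"
        using s1 unfolding EE_def by (simp add: algebra_simps)
      then show ?thesis by simp
    qed
    also have "\<dots> = exp (- alpha n * T) * exp EE" by (simp only: exp_add)
    finally show ?thesis unfolding A_def .
  qed
  have "lhs_rv n v N k tt T \<le> (\<Sum>rs\<in>RS. alpha n ^ k * (\<Prod>j<k. c (rs ! j)) * (exp (- alpha n * T) * exp EE))"
    unfolding lhs_eq using P1 Q1 Q2 pb RSp(4)
    by (intro sum_mono mult_mono prod_nonneg) (auto intro!: mult_nonneg_nonneg zero_le_power al Pnn)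
  also have "\<dots> = alpha n ^ k * exp (- alpha n * T) * exp EE * (\<Sum>rs\<in>RS. \<Prod>j<k. c (rs ! j))"
    by (simp add: sum_distrib_left sum_distrib_right algebra_simps)
  also have "\<dots> \<le> alpha n ^ k * exp (- alpha n * T) * exp EE * Vm k tt m"
    using VV al by (intro mult_left_mono) auto
  finally show "lhs_rv n v N k tt T \<le> alpha n ^ k * exp (- alpha n * T)
        * exp (alpha n * real k * m + kap n * 2 ^ n * (\<eta> + m * (T + m))) * Vm k tt m"
    unfolding EE_def K_def .
qed

lemma filt_space [simp]: "space (filt M v N t) = space M"
  unfolding filt_def by (simp add: space_measure_of_conv)

lemma filt_gen_sub: "{v s i -` A \<inter> space M | s i A. 1 \<le> s \<and> s \<le> t \<and> 1 \<le> i \<and> i \<le> N} \<subseteq> Pow (space M)"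
  by auto

lemma filt_sets: "sets (filt M v N t) = sigma_sets (space M) {v s i -` A \<inter> space M | s i A. 1 \<le> s \<and> s \<le> t \<and> 1 \<le> i \<and> i \<le> N}"
  unfolding filt_def by (rule sets_measure_of[OF filt_gen_sub])

lemma filt_meas:
  assumes "1 \<le> s" "s \<le> t" "1 \<le> i" "i \<le> N"
  shows "v s i \<in> measurable (filt M v N t) (count_space UNIV)"
proof (rule measurableI)
  fix A :: "nat set" assume "A \<in> sets (count_space UNIV)"
  have "v s i -` A \<inter> space M \<in> {v s i -` A \<inter> space M | s i A. 1 \<le> s \<and> s \<le> t \<and> 1 \<le> i \<and> i \<le> N}"
    using assms by blast
  then show "v s i -` A \<inter> space (filt M v N t) \<in> sets (filt M v N t)"
    unfolding filt_sets by auto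
qed simp

lemma filt_subalg:
  assumes meas: "\<And>s i. 1 \<le> s \<Longrightarrow> 1 \<le> i \<Longrightarrow> i \<le> N \<Longrightarrow> v s i \<in> measurable M (count_space UNIV)"
  shows "subalgebra M (filt M v N t)"
  unfolding subalgebra_def
proof (intro conjI)
  show "space (filt M v N t) = space M" by simp
  show "sets (filt M v N t) \<subseteq> sets M"
    unfolding filt_sets
  proof (rule sets.sigma_sets_subset)
    show "{v s i -` A \<inter> space M | s i A. 1 \<le> s \<and> s \<le> t \<and> 1 \<le> i \<and> i \<le> N} \<subseteq> sets M"
      using meas by (auto intro!: measurable_sets)
  qed
qed

lemma filt_sfs:
  assumes "prob_space M" and meas: "\<And>s i. 1 \<le> s \<Longrightarrow> 1 \<le> i \<Longrightarrow> i \<le> N \<Longrightarrow> v s i \<in> measurable M (count_space UNIV)"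
  shows "sigma_finite_subalgebra M (filt M v N t)"
proof -
  have sub: "subalgebra M (filt M v N t)" by (rule filt_subalg[OF meas])
  have "finite_measure M" using assms(1) by (simp add: prob_space_def)
  then have "finite_measure (restr_to_subalg M (filt M v N t))" by (rule finite_measure_restr_to_subalg[OF sub])
  then have "sigma_finite_measure (restr_to_subalg M (filt M v N t))" by (rule finite_measure.axioms(1))
  then show ?thesis using sub by (simp add: sigma_finite_subalgebra_def)
qed

lemma meas_comp_nat:
  assumes "f \<in> measurable M (count_space UNIV)"
  shows "(\<lambda>x. h (f x) :: real) \<in> borel_measurable M"
  using measurable_compose[OF assms, of h borel] by simp

lemma enat_le_tau: "enat r \<le> tauN v N u \<longleftrightarrow> (\<forall>s<r. Cs v N s < u)"
proof (cases "\<exists>s. u \<le> Cs v N s")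
  case True
  then have t: "tauN v N u = enat (LEAST s. u \<le> Cs v N s)" unfolding tauN_def Cs_def by auto
  show ?thesis
  proof
    assume "enat r \<le> tauN v N u"
    then have "r \<le> (LEAST s. u \<le> Cs v N s)" using t by simp
    then show "\<forall>s<r. Cs v N s < u" using not_less_Least by (metis leI order.strict_trans2)
  next
    assume a: "\<forall>s<r. Cs v N s < u"
    have "u \<le> Cs v N (LEAST s. u \<le> Cs v N s)" using True by (rule LeastI_ex)
    then have "\<not> (LEAST s. u \<le> Cs v N s) < r" using a by (meson not_le)
    then show "enat r \<le> tauN v N u" using t by simp
  qed
next
  case False
  then have "tauN v N u = \<infinity>" unfolding tauN_def Cs_def by auto
  then show ?thesis using False by (auto simp: not_le)
qed

lemma Cs_le_tau:
  assumes "enat s \<le> tauN v N T" "\<And>r. 1 \<le> r \<Longrightarrow> cN v N r \<le> 1" "0 \<le> T"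
  shows "Cs v N s \<le> T + 1"
proof (cases s)
  case 0 then show ?thesis using assms by (simp add: Cs_def)
next
  case (Suc s')
  have "Cs v N s' < T" using assms(1) unfolding enat_le_tau Suc by auto
  then show ?thesis using assms(2)[of s] Suc by (simp add: Cs_Suc)
qed

lemma partial_tau:
  "\<exists>s. enat s \<le> tauN v N T \<and> {r. r < S \<and> 1 \<le> r \<and> enat r \<le> tauN v N T} = {1..s}"
proof (cases "enat (S - 1) \<le> tauN v N T")
  case True
  have "{r. r < S \<and> 1 \<le> r \<and> enat r \<le> tauN v N T} = {1..S - 1}"
  proof (rule set_eqI, rule iffI)
    fix r assume "r \<in> {1..S - 1}"
    then have "enat r \<le> enat (S - 1)" "r < S" by auto
    moreover have "enat r \<le> tauN v N T" using order.trans[OF \<open>enat r \<le> enat (S - 1)\<close> True] .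
    ultimately show "r \<in> {r. r < S \<and> 1 \<le> r \<and> enat r \<le> tauN v N T}" using \<open>r \<in> {1..S-1}\<close> by auto
  qed auto
  then show ?thesis using True by blast
next
  case False
  then obtain L where L: "tauN v N T = enat L" "L < S - 1" by (cases "tauN v N T") auto
  have "{r. r < S \<and> 1 \<le> r \<and> enat r \<le> tauN v N T} = {1..L}" using L by auto
  then show ?thesis using L by auto
qed

lemma sum_c_tau:
  assumes c01: "\<And>r. 1 \<le> r \<Longrightarrow> 0 \<le> cN v N r \<and> cN v N r \<le> 1" and T: "0 \<le> T"
  shows "(\<Sum>r. if 1 \<le> r \<and> enat r \<le> tauN v N T then ennreal (cN v N r) else 0) \<le> ennreal (T + 1)"
proof (rule suminf_le_const)
  show "summable (\<lambda>r. if 1 \<le> r \<and> enat r \<le> tauN v N T then ennreal (cN v N r) else 0)" by (rule summableI)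
  fix S
  obtain s where s: "enat s \<le> tauN v N T" "{r. r < S \<and> 1 \<le> r \<and> enat r \<le> tauN v N T} = {1..s}"
    using partial_tau by blast
  have "(\<Sum>r<S. if 1 \<le> r \<and> enat r \<le> tauN v N T then ennreal (cN v N r) else 0)
      = (\<Sum>r\<in>{r. r < S \<and> 1 \<le> r \<and> enat r \<le> tauN v N T}. ennreal (cN v N r))"
  proof -
    have e: "{r. r < S \<and> 1 \<le> r \<and> enat r \<le> tauN v N T} = {..<S} \<inter> {r. 1 \<le> r \<and> enat r \<le> tauN v N T}" by auto
    show ?thesis unfolding e by (subst sum.inter_restrict) auto
  qed
  also have "\<dots> = ennreal (Cs v N s)" unfolding s(2) Cs_def using c01 by (subst sum_ennreal) auto
  also have "\<dots> \<le> ennreal (T + 1)" using Cs_le_tau[OF s(1) _ T] c01 by (intro ennreal_leI) auto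
  finally show "(\<Sum>r<S. if 1 \<le> r \<and> enat r \<le> tauN v N T then ennreal (cN v N r) else 0) \<le> ennreal (T + 1)" .
qed

lemma cN_meas:
  assumes "\<And>i. 1 \<le> i \<Longrightarrow> i \<le> N \<Longrightarrow> \<nu> r i \<in> measurable F (count_space UNIV)"
  shows "(\<lambda>\<omega>. cN (\<lambda>r i. \<nu> r i \<omega>) N r) \<in> borel_measurable F"
  unfolding cN_def using assms by (intro borel_measurable_times borel_measurable_const borel_measurable_sum meas_comp_nat) auto

lemma th3_meas:
  assumes "\<And>i. 1 \<le> i \<Longrightarrow> i \<le> N \<Longrightarrow> \<nu> r i \<in> measurable F (count_space UNIV)"
  shows "(\<lambda>\<omega>. th3 (\<lambda>i. \<nu> r i \<omega>) N) \<in> borel_measurable F"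
  unfolding th3_def using assms by (intro borel_measurable_times borel_measurable_const borel_measurable_sum meas_comp_nat) auto

lemma Cs_meas:
  assumes "\<And>r i. 1 \<le> r \<Longrightarrow> r \<le> s \<Longrightarrow> 1 \<le> i \<Longrightarrow> i \<le> N \<Longrightarrow> \<nu> r i \<in> measurable F (count_space UNIV)"
  shows "(\<lambda>\<omega>. Cs (\<lambda>r i. \<nu> r i \<omega>) N s) \<in> borel_measurable F"
  unfolding Cs_def using assms by (intro borel_measurable_sum cN_meas) auto

lemma tauset_meas:
  assumes "\<And>r i. 1 \<le> r \<Longrightarrow> r < s \<Longrightarrow> 1 \<le> i \<Longrightarrow> i \<le> N \<Longrightarrow> \<nu> r i \<in> measurable F (count_space UNIV)"
  shows "{\<omega>\<in>space F. enat s \<le> tauN (\<lambda>r i. \<nu> r i \<omega>) N T} \<in> sets F"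
proof -
  have "{\<omega>\<in>space F. enat s \<le> tauN (\<lambda>r i. \<nu> r i \<omega>) N T} = {\<omega>\<in>space F. \<forall>j\<in>{..<s}. Cs (\<lambda>r i. \<nu> r i \<omega>) N j < T}"
    unfolding enat_le_tau by auto
  also have "\<dots> \<in> sets F"
  proof (rule sets.sets_Collect_finite_All)
    fix j assume j: "j \<in> {..<s}"
    have "(\<lambda>\<omega>. Cs (\<lambda>r i. \<nu> r i \<omega>) N j) \<in> borel_measurable F"
      using j by (intro Cs_meas assms) auto
    then show "{\<omega> \<in> space F. Cs (\<lambda>r i. \<nu> r i \<omega>) N j < T} \<in> sets F"
      by (rule borel_measurable_less) simp
  qed simp
  finally show ?thesis .
qed

lemma sum_shift1: "(\<Sum>r<S. (g::nat\<Rightarrow>'b::comm_monoid_add) (Suc r)) = (\<Sum>r\<in>{1..S}. g r)"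
  by (simp add: sum.atLeast1_atMost_eq)

lemma sum_c_tau2:
  assumes c01: "\<And>r. 1 \<le> r \<Longrightarrow> 0 \<le> cN v N r \<and> cN v N r \<le> 1" and T: "0 \<le> T"
  shows "(\<Sum>r. ennreal (indicator {x. enat (Suc r) \<le> x} (tauN v N T) * cN v N (Suc r))) \<le> ennreal (T + 1)"
proof (rule suminf_le_const)
  show "summable (\<lambda>r. ennreal (indicator {x. enat (Suc r) \<le> x} (tauN v N T) * cN v N (Suc r)))" by (rule summableI)
  fix S
  obtain s where s: "enat s \<le> tauN v N T" "{r. r < Suc S \<and> 1 \<le> r \<and> enat r \<le> tauN v N T} = {1..s}"
    using partial_tau by blast
  have "(\<Sum>r<S. ennreal (indicator {x. enat (Suc r) \<le> x} (tauN v N T) * cN v N (Suc r)))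
      = (\<Sum>r\<in>{1..S}. ennreal (indicator {x. enat r \<le> x} (tauN v N T) * cN v N r))"
    by (rule sum_shift1[where g="\<lambda>r. ennreal (indicator {x. enat r \<le> x} (tauN v N T) * cN v N r)"])
  also have "\<dots> = (\<Sum>r\<in>{1..S}. if r \<in> {r. enat r \<le> tauN v N T} then ennreal (cN v N r) else 0)"
    by (intro sum.cong refl) (simp add: indicator_def)
  also have "\<dots> = (\<Sum>r\<in>{1..S} \<inter> {r. enat r \<le> tauN v N T}. ennreal (cN v N r))"
    by (rule sum.inter_restrict[symmetric]) simp
  also have "{1..S} \<inter> {r. enat r \<le> tauN v N T} = {r. r < Suc S \<and> 1 \<le> r \<and> enat r \<le> tauN v N T}"
    by (auto simp: less_Suc_eq_le)
  also have "\<dots> = {1..s}" by (rule s(2))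
  also have "(\<Sum>r\<in>{1..s}. ennreal (cN v N r)) = ennreal (Cs v N s)" unfolding Cs_def using c01 by (subst sum_ennreal) auto
  also have "\<dots> \<le> ennreal (T + 1)" using Cs_le_tau[OF s(1) _ T] c01 by (intro ennreal_leI) auto
  finally show "(\<Sum>r<S. ennreal (indicator {x. enat (Suc r) \<le> x} (tauN v N T) * cN v N (Suc r))) \<le> ennreal (T + 1)" .
qed

lemma theta_bound:
  fixes M :: "'a measure" and \<nu> :: "nat \<Rightarrow> nat \<Rightarrow> 'a \<Rightarrow> nat" and b T :: real
  assumes ps: "prob_space M"
    and meas: "\<And>t i. 1 \<le> t \<Longrightarrow> 1 \<le> i \<Longrightarrow> i \<le> N \<Longrightarrow> \<nu> t i \<in> measurable M (count_space UNIV)"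
    and tot: "\<And>t \<omega>. 1 \<le> t \<Longrightarrow> \<omega> \<in> space M \<Longrightarrow> (\<Sum>i=1..N. \<nu> t i \<omega>) = N"
    and third: "AE \<omega> in M. \<forall>t\<ge>1.
        (1 / ff N 3) * (\<Sum>i=1..N. real_cond_exp M (filt M \<nu> N (t - 1)) (\<lambda>x. ff (\<nu> t i x) 3) \<omega>)
        \<le> b * ((1 / ff N 2) * (\<Sum>i=1..N. real_cond_exp M (filt M \<nu> N (t - 1)) (\<lambda>x. ff (\<nu> t i x) 2) \<omega>))"
    and N3: "3 \<le> N" and T: "0 \<le> T"
  shows "(\<integral>\<^sup>+\<omega>. (\<Sum>r. ennreal (indicator {x. enat (Suc r) \<le> x} (tauN (\<lambda>r i. \<nu> r i \<omega>) N T) * th3 (\<lambda>i. \<nu> (Suc r) i \<omega>) N)) \<partial>M)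
     \<le> ennreal (\<bar>b\<bar> * (T + 1))"
proof -
  interpret prob_space M by (rule ps)
  define A where "A r = {\<omega>\<in>space M. enat r \<le> tauN (\<lambda>r i. \<nu> r i \<omega>) N T}" for r
  have indA: "indicator {x. enat r \<le> x} (tauN (\<lambda>r i. \<nu> r i \<omega>) N T) = (indicator (A r) \<omega> :: real)"
    if "\<omega> \<in> space M" for r \<omega> using that unfolding A_def by (simp add: indicator_def)
  have AM: "A r \<in> sets M" for r
    unfolding A_def by (rule tauset_meas) (use meas in auto)
  have AF: "A r \<in> sets (filt M \<nu> N (r - 1))" for r
  proof -
    have "{\<omega>\<in>space (filt M \<nu> N (r - 1)). enat r \<le> tauN (\<lambda>r i. \<nu> r i \<omega>) N T} \<in> sets (filt M \<nu> N (r - 1))"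
      by (rule tauset_meas) (auto intro!: filt_meas)
    then show ?thesis unfolding A_def by simp
  qed
  have ff2pos: "0 < ff N 2" and ff3pos: "0 < ff N 3" using N3 by (auto intro!: ff_pos)
  have key: "(\<integral>\<^sup>+\<omega>. ennreal (indicator (A r) \<omega> * th3 (\<lambda>i. \<nu> r i \<omega>) N) \<partial>M)
      \<le> ennreal \<bar>b\<bar> * (\<integral>\<^sup>+\<omega>. ennreal (indicator (A r) \<omega> * cN (\<lambda>r i. \<nu> r i \<omega>) N r) \<partial>M)" if r: "1 \<le> r" for r
  proof -
    define F where "F = filt M \<nu> N (r - 1)"
    have sfs: "sigma_finite_subalgebra M F" unfolding F_def by (rule filt_sfs[OF ps meas])
    define Ind where "Ind = (\<lambda>\<omega>. indicator (A r) \<omega> :: real)"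
    have IndF: "Ind \<in> borel_measurable F" unfolding Ind_def F_def using AF by simp
    have IndM: "Ind \<in> borel_measurable M" unfolding Ind_def using AM by simp
    have Ind01: "0 \<le> Ind \<omega>" "Ind \<omega> \<le> 1" for \<omega> unfolding Ind_def by (auto simp: indicator_def)
    define X where "X i = (\<lambda>\<omega>. ff (\<nu> r i \<omega>) 3)" for i
    define Y where "Y i = (\<lambda>\<omega>. ff (\<nu> r i \<omega>) 2)" for i
    have XM: "X i \<in> borel_measurable M" "Y i \<in> borel_measurable M" if "i \<in> {1..N}" for i
      unfolding X_def Y_def using that r meas_comp_nat[OF meas[of r i]] by auto
    have nuN: "\<nu> r i \<omega> \<le> N" if "i \<in> {1..N}" "\<omega> \<in> space M" for i \<omega>
      using w_le_N[of "\<lambda>i. \<nu> r i \<omega>" N i] tot[OF r that(2)] that(1) by simp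
    have Xb: "0 \<le> X i \<omega> \<and> X i \<omega> \<le> real N ^ 3" "0 \<le> Y i \<omega> \<and> Y i \<omega> \<le> real N ^ 2" if "i \<in> {1..N}" "\<omega> \<in> space M" for i \<omega>
    proof -
      have a: "ff (\<nu> r i \<omega>) 3 \<le> real (\<nu> r i \<omega>) ^ 3" "ff (\<nu> r i \<omega>) 2 \<le> real (\<nu> r i \<omega>) ^ 2" by (rule ff_le_pow)+
      have b: "real (\<nu> r i \<omega>) ^ 3 \<le> real N ^ 3" "real (\<nu> r i \<omega>) ^ 2 \<le> real N ^ 2"
        using nuN[OF that] by (auto intro!: power_mono)
      have "ff (\<nu> r i \<omega>) 3 \<le> real N ^ 3" "ff (\<nu> r i \<omega>) 2 \<le> real N ^ 2"
        using order_trans[OF a(1) b(1)] order_trans[OF a(2) b(2)] .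
      then show "0 \<le> X i \<omega> \<and> X i \<omega> \<le> real N ^ 3" "0 \<le> Y i \<omega> \<and> Y i \<omega> \<le> real N ^ 2"
        unfolding X_def Y_def by (auto intro: ff_nonneg)
    qed
    have intX: "integrable M (\<lambda>\<omega>. Ind \<omega> * X i \<omega>)" "integrable M (\<lambda>\<omega>. Ind \<omega> * Y i \<omega>)" if i: "i \<in> {1..N}" for i
    proof -
      show "integrable M (\<lambda>\<omega>. Ind \<omega> * X i \<omega>)"
      proof (rule integrable_const_bound[where B="real N ^ 3"])
        show "AE x in M. norm (Ind x * X i x) \<le> real N ^ 3"
        proof (rule AE_I2)
          fix x assume x: "x \<in> space M"
          have "Ind x * X i x \<le> 1 * real N ^ 3" using Xb[OF i x] Ind01[of x] by (intro mult_mono) auto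
          then show "norm (Ind x * X i x) \<le> real N ^ 3" using Xb[OF i x] Ind01[of x] by simp
        qed
      qed (use IndM XM i in auto)
      show "integrable M (\<lambda>\<omega>. Ind \<omega> * Y i \<omega>)"
      proof (rule integrable_const_bound[where B="real N ^ 2"])
        show "AE x in M. norm (Ind x * Y i x) \<le> real N ^ 2"
        proof (rule AE_I2)
          fix x assume x: "x \<in> space M"
          have "Ind x * Y i x \<le> 1 * real N ^ 2" using Xb[OF i x] Ind01[of x] by (intro mult_mono) auto
          then show "norm (Ind x * Y i x) \<le> real N ^ 2" using Xb[OF i x] Ind01[of x] by simp
        qed
      qed (use IndM XM i in auto)
    qed
    define RX where "RX i = real_cond_exp M F (X i)" for i
    define RY where "RY i = real_cond_exp M F (Y i)" for i
    have RXi: "integrable M (\<lambda>\<omega>. Ind \<omega> * RX i \<omega>)" "(\<integral>\<omega>. Ind \<omega> * RX i \<omega> \<partial>M) = (\<integral>\<omega>. Ind \<omega> * X i \<omega> \<partial>M)"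
      if "i \<in> {1..N}" for i
      unfolding RX_def using sigma_finite_subalgebra.real_cond_exp_intg[OF sfs intX(1)[OF that] IndF XM(1)[OF that]] by auto
    have RYi: "integrable M (\<lambda>\<omega>. Ind \<omega> * RY i \<omega>)" "(\<integral>\<omega>. Ind \<omega> * RY i \<omega> \<partial>M) = (\<integral>\<omega>. Ind \<omega> * Y i \<omega> \<partial>M)"
      if "i \<in> {1..N}" for i
      unfolding RY_def using sigma_finite_subalgebra.real_cond_exp_intg[OF sfs intX(2)[OF that] IndF XM(2)[OF that]] by auto
    have RYpos: "AE \<omega> in M. \<forall>i\<in>{1..N}. 0 \<le> RY i \<omega>"
    proof (rule AE_finite_allI)
      fix i assume i: "i \<in> {1..N}"
      show "AE \<omega> in M. 0 \<le> RY i \<omega>" unfolding RY_def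
        by (rule sigma_finite_subalgebra.real_cond_exp_pos[OF sfs]) (use Xb[OF i] XM(2)[OF i] in auto)
    qed simp
    have third_r: "AE \<omega> in M. (1 / ff N 3) * (\<Sum>i=1..N. RX i \<omega>) \<le> b * ((1 / ff N 2) * (\<Sum>i=1..N. RY i \<omega>))"
      using third r unfolding RX_def RY_def X_def Y_def F_def by (auto elim!: AE_mp)
    have thint: "(\<integral>\<omega>. Ind \<omega> * th3 (\<lambda>i. \<nu> r i \<omega>) N \<partial>M) = (\<integral>\<omega>. Ind \<omega> * ((1 / ff N 3) * (\<Sum>i=1..N. RX i \<omega>)) \<partial>M)"
    proof -
      have "(\<integral>\<omega>. Ind \<omega> * th3 (\<lambda>i. \<nu> r i \<omega>) N \<partial>M) = (\<integral>\<omega>. (1 / ff N 3) * (\<Sum>i=1..N. Ind \<omega> * X i \<omega>) \<partial>M)"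
        unfolding th3_def X_def by (simp add: sum_distrib_left algebra_simps)
      also have "\<dots> = (1 / ff N 3) * (\<Sum>i=1..N. \<integral>\<omega>. Ind \<omega> * X i \<omega> \<partial>M)"
        using Bochner_Integration.integral_sum[where M=M and I="{1..N}" and f="\<lambda>i \<omega>. Ind \<omega> * X i \<omega>"] intX(1) by simp
      also have "\<dots> = (1 / ff N 3) * (\<Sum>i=1..N. \<integral>\<omega>. Ind \<omega> * RX i \<omega> \<partial>M)"
        using RXi by simp
      also have "\<dots> = (\<integral>\<omega>. (1 / ff N 3) * (\<Sum>i=1..N. Ind \<omega> * RX i \<omega>) \<partial>M)"
        using Bochner_Integration.integral_sum[where M=M and I="{1..N}" and f="\<lambda>i \<omega>. Ind \<omega> * RX i \<omega>"] RXi(1) by simp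
      also have "\<dots> = (\<integral>\<omega>. Ind \<omega> * ((1 / ff N 3) * (\<Sum>i=1..N. RX i \<omega>)) \<partial>M)"
        by (simp add: sum_distrib_left algebra_simps)
      finally show ?thesis .
    qed
    have cint: "(\<integral>\<omega>. Ind \<omega> * cN (\<lambda>r i. \<nu> r i \<omega>) N r \<partial>M) = (\<integral>\<omega>. Ind \<omega> * ((1 / ff N 2) * (\<Sum>i=1..N. RY i \<omega>)) \<partial>M)"
    proof -
      have "(\<integral>\<omega>. Ind \<omega> * cN (\<lambda>r i. \<nu> r i \<omega>) N r \<partial>M) = (\<integral>\<omega>. (1 / ff N 2) * (\<Sum>i=1..N. Ind \<omega> * Y i \<omega>) \<partial>M)"
        unfolding cN_def Y_def by (simp add: sum_distrib_left algebra_simps)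
      also have "\<dots> = (1 / ff N 2) * (\<Sum>i=1..N. \<integral>\<omega>. Ind \<omega> * Y i \<omega> \<partial>M)"
        using Bochner_Integration.integral_sum[where M=M and I="{1..N}" and f="\<lambda>i \<omega>. Ind \<omega> * Y i \<omega>"] intX(2) by simp
      also have "\<dots> = (1 / ff N 2) * (\<Sum>i=1..N. \<integral>\<omega>. Ind \<omega> * RY i \<omega> \<partial>M)"
        using RYi by simp
      also have "\<dots> = (\<integral>\<omega>. (1 / ff N 2) * (\<Sum>i=1..N. Ind \<omega> * RY i \<omega>) \<partial>M)"
        using Bochner_Integration.integral_sum[where M=M and I="{1..N}" and f="\<lambda>i \<omega>. Ind \<omega> * RY i \<omega>"] RYi(1) by simp
      also have "\<dots> = (\<integral>\<omega>. Ind \<omega> * ((1 / ff N 2) * (\<Sum>i=1..N. RY i \<omega>)) \<partial>M)"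
        by (simp add: sum_distrib_left algebra_simps)
      finally show ?thesis .
    qed
    have intRX: "integrable M (\<lambda>\<omega>. Ind \<omega> * ((1 / ff N 3) * (\<Sum>i=1..N. RX i \<omega>)))"
    proof -
      have "integrable M (\<lambda>\<omega>. (1 / ff N 3) * (\<Sum>i=1..N. Ind \<omega> * RX i \<omega>))"
        by (intro integrable_mult_right Bochner_Integration.integrable_sum RXi(1)) auto
      then show ?thesis by (simp add: sum_distrib_left algebra_simps)
    qed
    have intRY: "integrable M (\<lambda>\<omega>. Ind \<omega> * ((1 / ff N 2) * (\<Sum>i=1..N. RY i \<omega>)))"
    proof -
      have "integrable M (\<lambda>\<omega>. (1 / ff N 2) * (\<Sum>i=1..N. Ind \<omega> * RY i \<omega>))"
        by (intro integrable_mult_right Bochner_Integration.integrable_sum RYi(1)) auto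
      then show ?thesis by (simp add: sum_distrib_left algebra_simps)
    qed
    have le: "(\<integral>\<omega>. Ind \<omega> * th3 (\<lambda>i. \<nu> r i \<omega>) N \<partial>M) \<le> \<bar>b\<bar> * (\<integral>\<omega>. Ind \<omega> * cN (\<lambda>r i. \<nu> r i \<omega>) N r \<partial>M)"
    proof -
      have "(\<integral>\<omega>. Ind \<omega> * ((1 / ff N 3) * (\<Sum>i=1..N. RX i \<omega>)) \<partial>M)
          \<le> (\<integral>\<omega>. \<bar>b\<bar> * (Ind \<omega> * ((1 / ff N 2) * (\<Sum>i=1..N. RY i \<omega>))) \<partial>M)"
      proof (rule integral_mono_AE[OF intRX])
        show "integrable M (\<lambda>\<omega>. \<bar>b\<bar> * (Ind \<omega> * ((1 / ff N 2) * (\<Sum>i=1..N. RY i \<omega>))))"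
          using integrable_mult_right[OF intRY, of "\<bar>b\<bar>"] .
        show "AE \<omega> in M. Ind \<omega> * ((1 / ff N 3) * (\<Sum>i=1..N. RX i \<omega>)) \<le> \<bar>b\<bar> * (Ind \<omega> * ((1 / ff N 2) * (\<Sum>i=1..N. RY i \<omega>)))"
          using third_r RYpos
        proof eventually_elim
          case (elim \<omega>)
          have Z: "0 \<le> (1 / ff N 2) * (\<Sum>i=1..N. RY i \<omega>)" using elim(2) ff2pos by (intro mult_nonneg_nonneg sum_nonneg) auto
          have "(1 / ff N 3) * (\<Sum>i=1..N. RX i \<omega>) \<le> \<bar>b\<bar> * ((1 / ff N 2) * (\<Sum>i=1..N. RY i \<omega>))"
            using elim(1) mult_right_mono[OF abs_ge_self[of b] Z] by linarith
          then have "Ind \<omega> * ((1 / ff N 3) * (\<Sum>i=1..N. RX i \<omega>)) \<le> Ind \<omega> * (\<bar>b\<bar> * ((1 / ff N 2) * (\<Sum>i=1..N. RY i \<omega>)))"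
            using Ind01[of \<omega>] by (intro mult_left_mono) auto
          then show ?case by (metis mult.left_commute)
        qed
      qed
      then show ?thesis unfolding thint cint by simp
    qed
    have ni1: "(\<integral>\<^sup>+\<omega>. ennreal (Ind \<omega> * th3 (\<lambda>i. \<nu> r i \<omega>) N) \<partial>M) = ennreal (\<integral>\<omega>. Ind \<omega> * th3 (\<lambda>i. \<nu> r i \<omega>) N \<partial>M)"
    proof (rule nn_integral_eq_integral)
      have "integrable M (\<lambda>\<omega>. (1 / ff N 3) * (\<Sum>i=1..N. Ind \<omega> * X i \<omega>))"
        by (intro integrable_mult_right Bochner_Integration.integrable_sum intX(1)) auto
      then show "integrable M (\<lambda>\<omega>. Ind \<omega> * th3 (\<lambda>i. \<nu> r i \<omega>) N)"
        unfolding th3_def X_def by (simp add: sum_distrib_left algebra_simps)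
      show "AE \<omega> in M. 0 \<le> Ind \<omega> * th3 (\<lambda>i. \<nu> r i \<omega>) N" using Ind01 th3_nonneg by simp
    qed
    have ni2: "(\<integral>\<^sup>+\<omega>. ennreal (Ind \<omega> * cN (\<lambda>r i. \<nu> r i \<omega>) N r) \<partial>M) = ennreal (\<integral>\<omega>. Ind \<omega> * cN (\<lambda>r i. \<nu> r i \<omega>) N r \<partial>M)"
    proof (rule nn_integral_eq_integral)
      have "integrable M (\<lambda>\<omega>. (1 / ff N 2) * (\<Sum>i=1..N. Ind \<omega> * Y i \<omega>))"
        by (intro integrable_mult_right Bochner_Integration.integrable_sum intX(2)) auto
      then show "integrable M (\<lambda>\<omega>. Ind \<omega> * cN (\<lambda>r i. \<nu> r i \<omega>) N r)"
        unfolding cN_def Y_def by (simp add: sum_distrib_left algebra_simps)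
      show "AE \<omega> in M. 0 \<le> Ind \<omega> * cN (\<lambda>r i. \<nu> r i \<omega>) N r" using Ind01 c2_nonneg by (simp add: cN_c2)
    qed
    have "ennreal (\<integral>\<omega>. Ind \<omega> * th3 (\<lambda>i. \<nu> r i \<omega>) N \<partial>M) \<le> ennreal (\<bar>b\<bar> * (\<integral>\<omega>. Ind \<omega> * cN (\<lambda>r i. \<nu> r i \<omega>) N r \<partial>M))"
      using le by (rule ennreal_leI)
    also have "\<dots> = ennreal \<bar>b\<bar> * ennreal (\<integral>\<omega>. Ind \<omega> * cN (\<lambda>r i. \<nu> r i \<omega>) N r \<partial>M)"
      by (rule ennreal_mult') simp
    finally show ?thesis using ni1 ni2 unfolding Ind_def by simp
  qed
  have thM: "(\<lambda>\<omega>. th3 (\<lambda>i. \<nu> r i \<omega>) N) \<in> borel_measurable M" "(\<lambda>\<omega>. cN (\<lambda>r i. \<nu> r i \<omega>) N r) \<in> borel_measurable M"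
    if "1 \<le> r" for r using that by (auto intro!: th3_meas cN_meas meas)
  have "(\<integral>\<^sup>+\<omega>. (\<Sum>r. ennreal (indicator {x. enat (Suc r) \<le> x} (tauN (\<lambda>r i. \<nu> r i \<omega>) N T) * th3 (\<lambda>i. \<nu> (Suc r) i \<omega>) N)) \<partial>M)
      = (\<integral>\<^sup>+\<omega>. (\<Sum>r. ennreal (indicator (A (Suc r)) \<omega> * th3 (\<lambda>i. \<nu> (Suc r) i \<omega>) N)) \<partial>M)"
    by (intro nn_integral_cong) (simp add: indA)
  also have "\<dots> = (\<Sum>r. \<integral>\<^sup>+\<omega>. ennreal (indicator (A (Suc r)) \<omega> * th3 (\<lambda>i. \<nu> (Suc r) i \<omega>) N) \<partial>M)"
    by (rule nn_integral_suminf) (use AM thM in auto)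
  also have "\<dots> \<le> (\<Sum>r. ennreal \<bar>b\<bar> * \<integral>\<^sup>+\<omega>. ennreal (indicator (A (Suc r)) \<omega> * cN (\<lambda>r i. \<nu> r i \<omega>) N (Suc r)) \<partial>M)"
    by (intro suminf_le summableI key) auto
  also have "\<dots> = ennreal \<bar>b\<bar> * (\<Sum>r. \<integral>\<^sup>+\<omega>. ennreal (indicator (A (Suc r)) \<omega> * cN (\<lambda>r i. \<nu> r i \<omega>) N (Suc r)) \<partial>M)"
    by simp
  also have "(\<Sum>r. \<integral>\<^sup>+\<omega>. ennreal (indicator (A (Suc r)) \<omega> * cN (\<lambda>r i. \<nu> r i \<omega>) N (Suc r)) \<partial>M)
      = (\<integral>\<^sup>+\<omega>. (\<Sum>r. ennreal (indicator (A (Suc r)) \<omega> * cN (\<lambda>r i. \<nu> r i \<omega>) N (Suc r))) \<partial>M)"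
    by (rule nn_integral_suminf[symmetric]) (use AM thM in auto)
  also have "\<dots> \<le> (\<integral>\<^sup>+\<omega>. ennreal (T + 1) \<partial>M)"
  proof (rule nn_integral_mono)
    fix \<omega> assume \<omega>: "\<omega> \<in> space M"
    have c01: "0 \<le> cN (\<lambda>r i. \<nu> r i \<omega>) N r \<and> cN (\<lambda>r i. \<nu> r i \<omega>) N r \<le> 1" if "1 \<le> r" for r
      using c2_nonneg c2_le1[OF tot[OF that \<omega>]] N3 by (simp add: cN_c2)
    show "(\<Sum>r. ennreal (indicator (A (Suc r)) \<omega> * cN (\<lambda>r i. \<nu> r i \<omega>) N (Suc r))) \<le> ennreal (T + 1)"
      using sum_c_tau2[OF c01 T] \<omega> by (simp add: indA[symmetric])
  qed
  also have "\<dots> = ennreal (T + 1)" by (simp add: emeasure_space_1)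
  finally have "(\<integral>\<^sup>+\<omega>. (\<Sum>r. ennreal (indicator {x. enat (Suc r) \<le> x} (tauN (\<lambda>r i. \<nu> r i \<omega>) N T) * th3 (\<lambda>i. \<nu> (Suc r) i \<omega>) N)) \<partial>M)
     \<le> ennreal \<bar>b\<bar> * ennreal (T + 1)" by (simp add: mult_left_mono)
  also have "\<dots> = ennreal (\<bar>b\<bar> * (T + 1))" using T by (simp add: ennreal_mult)
  finally show ?thesis .
qed

lemma integral_bound_N:
  fixes M :: "'a measure" and \<nu> :: "nat \<Rightarrow> nat \<Rightarrow> 'a \<Rightarrow> nat" and b T \<epsilon> \<eta> :: real and tt :: "nat \<Rightarrow> real"
  assumes ps: "prob_space M"
    and meas: "\<And>t i. 1 \<le> t \<Longrightarrow> 1 \<le> i \<Longrightarrow> i \<le> N \<Longrightarrow> \<nu> t i \<in> measurable M (count_space UNIV)"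
    and tot: "\<And>t \<omega>. 1 \<le> t \<Longrightarrow> \<omega> \<in> space M \<Longrightarrow> (\<Sum>i=1..N. \<nu> t i \<omega>) = N"
    and taufin: "AE \<omega> in M. tauN (\<lambda>r i. \<nu> r i \<omega>) N T \<noteq> \<infinity>"
    and third: "AE \<omega> in M. \<forall>t\<ge>1.
        (1 / ff N 3) * (\<Sum>i=1..N. real_cond_exp M (filt M \<nu> N (t - 1)) (\<lambda>x. ff (\<nu> t i x) 3) \<omega>)
        \<le> b * ((1 / ff N 2) * (\<Sum>i=1..N. real_cond_exp M (filt M \<nu> N (t - 1)) (\<lambda>x. ff (\<nu> t i x) 2) \<omega>))"
    and N: "2 * n \<le> N" "4 \<le> N"
    and t0: "tt 0 = 0" and tmono: "\<And>j. j < k \<Longrightarrow> tt j \<le> tt (Suc j)" and tT: "tt k \<le> T"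
    and eps: "0 < \<epsilon>" and eta: "0 < \<eta>"
  shows "(\<integral>\<omega>. lhs_rv n (\<lambda>r i. \<nu> r i \<omega>) N k tt T \<partial>M)
     \<le> alpha n ^ k * exp (- alpha n * T)
        * exp (alpha n * real k * (\<eta> / \<epsilon> + \<epsilon> + 1 / (real N - 1)) + kap n * 2 ^ n * (\<eta> + (\<eta> / \<epsilon> + \<epsilon> + 1 / (real N - 1)) * (T + (\<eta> / \<epsilon> + \<epsilon> + 1 / (real N - 1)))))
        * Vm k tt (\<eta> / \<epsilon> + \<epsilon> + 1 / (real N - 1))
       + alpha n ^ k * Vm k tt 1 * (\<bar>b\<bar> * (T + 1) / \<eta>)"
proof -
  interpret prob_space M by (rule ps)
  define m where "m = \<eta> / \<epsilon> + \<epsilon> + 1 / (real N - 1)"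
  define Bg where "Bg = alpha n ^ k * exp (- alpha n * T)
        * exp (alpha n * real k * m + kap n * 2 ^ n * (\<eta> + m * (T + m))) * Vm k tt m"
  define Bc where "Bc = alpha n ^ k * Vm k tt 1"
  define f where "f \<omega> = lhs_rv n (\<lambda>r i. \<nu> r i \<omega>) N k tt T" for \<omega>
  define \<Theta> where "\<Theta> \<omega> = (\<Sum>r. ennreal (indicator {x. enat (Suc r) \<le> x} (tauN (\<lambda>r i. \<nu> r i \<omega>) N T) * th3 (\<lambda>i. \<nu> (Suc r) i \<omega>) N))" for \<omega>
  define Bad where "Bad = {\<omega>\<in>space M. ennreal \<eta> < \<Theta> \<omega>}"
  have ttm: "\<And>i j. i \<le> j \<Longrightarrow> j \<le> k \<Longrightarrow> tt i \<le> tt j" using mono_bounded[of k tt] tmono by blast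
  have T0: "0 \<le> T" using ttm[of 0 k] t0 tT by simp
  have m0: "0 \<le> m" unfolding m_def using eps eta N by (auto intro!: add_nonneg_nonneg)
  have Vnn: "0 \<le> Vm k tt x" if "0 \<le> x" for x
    unfolding Vm_def using that ttm
    by (intro sum_nonneg prod_nonneg divide_nonneg_pos zero_le_power add_nonneg_nonneg) (auto simp: diff_le_eq)
  have al: "0 \<le> alpha n" by (rule alpha_nonneg)
  have Bgnn: "0 \<le> Bg" unfolding Bg_def using Vnn[OF m0] al by auto
  have Bcnn: "0 \<le> Bc" unfolding Bc_def using Vnn[of 1] al by auto
  have termM: "(\<lambda>\<omega>. ennreal (indicator {x. enat (Suc r) \<le> x} (tauN (\<lambda>r i. \<nu> r i \<omega>) N T) * th3 (\<lambda>i. \<nu> (Suc r) i \<omega>) N)) \<in> borel_measurable M" for r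
  proof -
    have S: "{\<omega>\<in>space M. enat (Suc r) \<le> tauN (\<lambda>r i. \<nu> r i \<omega>) N T} \<in> sets M"
      by (rule tauset_meas) (use meas in auto)
    have th: "(\<lambda>\<omega>. th3 (\<lambda>i. \<nu> (Suc r) i \<omega>) N) \<in> borel_measurable M" by (intro th3_meas meas) auto
    have "(\<lambda>\<omega>. ennreal (indicator {\<omega>\<in>space M. enat (Suc r) \<le> tauN (\<lambda>r i. \<nu> r i \<omega>) N T} \<omega> * th3 (\<lambda>i. \<nu> (Suc r) i \<omega>) N)) \<in> borel_measurable M"
      using measurable_compose[OF borel_measurable_times[OF borel_measurable_indicator[OF S] th] measurable_ennreal] by (simp add: comp_def)
    then show ?thesis by (rule measurable_cong[THEN iffD1, rotated]) (simp add: indicator_def)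
  qed
  have ThM: "\<Theta> \<in> borel_measurable M" unfolding \<Theta>_def by (rule borel_measurable_suminf_order) (rule termM)
  have BadM: "Bad \<in> sets M" unfolding Bad_def by (rule borel_measurable_less[OF borel_measurable_const ThM])
  have PBad: "measure M Bad \<le> \<bar>b\<bar> * (T + 1) / \<eta>"
  proof -
    define c where "c = ennreal (1 / \<eta>)"
    have setM: "{x\<in>space M. 1 \<le> c * \<Theta> x} \<in> sets M"
      unfolding c_def by (rule borel_measurable_le[OF borel_measurable_const borel_measurable_times_ennreal[OF borel_measurable_const ThM]])
    have sub: "Bad \<subseteq> {x\<in>space M. 1 \<le> c * \<Theta> x}"
    proof
      fix x assume "x \<in> Bad"
      then have x: "x \<in> space M" "ennreal \<eta> < \<Theta> x" unfolding Bad_def by auto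
      have "1 = c * ennreal \<eta>" unfolding c_def using eta by (simp add: ennreal_mult'[symmetric])
      also have "\<dots> \<le> c * \<Theta> x" using x(2) by (intro mult_left_mono) auto
      finally have "1 \<le> c * \<Theta> x" .
      then show "x \<in> {x\<in>space M. 1 \<le> c * \<Theta> x}" using x(1) by simp
    qed
    have e1: "emeasure M Bad \<le> emeasure M {x\<in>space M. 1 \<le> c * \<Theta> x}"
      by (rule emeasure_mono[OF sub setM])
    have mk: "emeasure M {x\<in>space M. 1 \<le> c * \<Theta> x} \<le> c * (\<integral>\<^sup>+x. \<Theta> x * indicator (space M) x \<partial>M)"
      by (rule nn_integral_Markov_inequality[OF borel_measurable_times_ennreal[OF ThM borel_measurable_indicator[OF sets.top]] sets.top])
    have e2: "(\<integral>\<^sup>+x. \<Theta> x * indicator (space M) x \<partial>M) = (\<integral>\<^sup>+x. \<Theta> x \<partial>M)"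
      by (intro nn_integral_cong) simp
    have e3: "(\<integral>\<^sup>+x. \<Theta> x \<partial>M) \<le> ennreal (\<bar>b\<bar> * (T + 1))"
      unfolding \<Theta>_def by (rule theta_bound[OF ps meas tot third _ T0]) (use N in auto)
    have "emeasure M Bad \<le> c * ennreal (\<bar>b\<bar> * (T + 1))"
      using e1 mk e2 e3 mult_left_mono[OF e3, of c] by (metis order_trans zero_le)
    also have "\<dots> = ennreal (\<bar>b\<bar> * (T + 1) / \<eta>)" unfolding c_def using eta by (simp add: ennreal_mult'[symmetric])
    finally have "ennreal (measure M Bad) \<le> ennreal (\<bar>b\<bar> * (T + 1) / \<eta>)" by (simp add: emeasure_eq_measure)
    then show ?thesis using T0 eta by (subst (asm) ennreal_le_iff) auto
  qed
  have pw: "AE \<omega> in M. f \<omega> \<le> Bg + Bc * indicator Bad \<omega>"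
    using taufin
  proof (rule AE_mp, intro AE_I2 impI)
    fix \<omega> assume \<omega>: "\<omega> \<in> space M" and fin: "tauN (\<lambda>r i. \<nu> r i \<omega>) N T \<noteq> \<infinity>"
    then obtain L where L: "tauN (\<lambda>r i. \<nu> r i \<omega>) N T = enat L" by auto
    have tot\<omega>: "\<And>t. 1 \<le> t \<Longrightarrow> sum (\<lambda>i. \<nu> t i \<omega>) {1..N} = N" using tot \<omega> by simp
    have c1: "cN (\<lambda>r i. \<nu> r i \<omega>) N r \<le> 1" if "r \<in> {1..L}" for r
      using c2_le1[OF tot\<omega>] that N by (simp add: cN_c2)
    show "f \<omega> \<le> Bg + Bc * indicator Bad \<omega>"
    proof (cases "\<omega> \<in> Bad")
      case True
      have "f \<omega> \<le> alpha n ^ k * Vm k tt 1"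
        unfolding f_def by (rule det_bound(1)[OF tot\<omega> N t0 tmono tT L _ c1]) auto
      then show ?thesis using True Bgnn unfolding Bc_def by simp
    next
      case False
      then have "\<Theta> \<omega> \<le> ennreal \<eta>" using \<omega> unfolding Bad_def by auto
      moreover have "\<Theta> \<omega> = ennreal (\<Sum>r=1..L. th3 (\<lambda>i. \<nu> r i \<omega>) N)"
      proof -
        have "\<Theta> \<omega> = (\<Sum>r<L. ennreal (indicator {x. enat (Suc r) \<le> x} (tauN (\<lambda>r i. \<nu> r i \<omega>) N T) * th3 (\<lambda>i. \<nu> (Suc r) i \<omega>) N))"
          unfolding \<Theta>_def by (rule suminf_finite) (auto simp: L indicator_def)
        also have "\<dots> = (\<Sum>r<L. ennreal (th3 (\<lambda>i. \<nu> (Suc r) i \<omega>) N))"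
          by (intro sum.cong refl) (auto simp: L indicator_def)
        also have "\<dots> = ennreal (\<Sum>r<L. th3 (\<lambda>i. \<nu> (Suc r) i \<omega>) N)" by (rule sum_ennreal) (rule th3_nonneg)
        also have "(\<Sum>r<L. th3 (\<lambda>i. \<nu> (Suc r) i \<omega>) N) = (\<Sum>r=1..L. th3 (\<lambda>i. \<nu> r i \<omega>) N)"
          by (rule sum_shift1[where g="\<lambda>r. th3 (\<lambda>i. \<nu> r i \<omega>) N"])
        finally show ?thesis .
      qed
      ultimately have sth: "(\<Sum>r=1..L. th3 (\<lambda>i. \<nu> r i \<omega>) N) \<le> \<eta>" using eta by (simp add: ennreal_le_iff)
      have cm: "cN (\<lambda>r i. \<nu> r i \<omega>) N r \<le> m" if r: "r \<in> {1..L}" for r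
      proof -
        have "th3 (\<lambda>i. \<nu> r i \<omega>) N \<le> (\<Sum>r=1..L. th3 (\<lambda>i. \<nu> r i \<omega>) N)"
          using r by (intro member_le_sum th3_nonneg) auto
        then have thr: "th3 (\<lambda>i. \<nu> r i \<omega>) N \<le> \<eta>" using sth by simp
        have "cN (\<lambda>r i. \<nu> r i \<omega>) N r \<le> th3 (\<lambda>i. \<nu> r i \<omega>) N / \<epsilon> + \<epsilon> + 1 / (real N - 1)"
          using c2_th3[OF tot\<omega> _ eps] r N by (simp add: cN_c2)
        also have "\<dots> \<le> m" unfolding m_def using thr eps by (simp add: divide_right_mono)
        finally show ?thesis .
      qed
      have "f \<omega> \<le> Bg"
        unfolding f_def Bg_def by (rule det_bound(2)[OF tot\<omega> N t0 tmono tT L m0 cm sth]) auto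
      then show ?thesis using False by simp
    qed
  qed
  have intg: "integrable M (\<lambda>\<omega>. Bg + Bc * indicator Bad \<omega>)" using BadM
    by (intro Bochner_Integration.integrable_add integrable_mult_right integrable_real_indicator) (auto simp: emeasure_eq_measure)
  have i2: "integrable M (\<lambda>\<omega>. Bc * indicator Bad \<omega>)" using BadM
    by (intro integrable_mult_right integrable_real_indicator) (auto simp: emeasure_eq_measure)
  have intval: "(\<integral>\<omega>. Bg + Bc * indicator Bad \<omega> \<partial>M) = Bg + Bc * measure M Bad"
    using BadM by (simp add: Bochner_Integration.integral_add[OF integrable_const i2] prob_space emeasure_eq_measure)
  have "(\<integral>\<omega>. f \<omega> \<partial>M) \<le> Bg + Bc * measure M Bad"
  proof (cases "integrable M f")
    case True
    then show ?thesis using integral_mono_AE[OF True intg pw] intval by simp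
  next
    case False
    then have "(\<integral>\<omega>. f \<omega> \<partial>M) = 0" by (rule not_integrable_integral_eq)
    then show ?thesis using Bgnn Bcnn measure_nonneg[of M Bad] by simp
  qed
  also have "\<dots> \<le> Bg + Bc * (\<bar>b\<bar> * (T + 1) / \<eta>)"
    using PBad Bcnn by (intro add_left_mono mult_left_mono) auto
  finally show ?thesis unfolding f_def Bg_def Bc_def m_def .
qed

lemma inv_lim: "((\<lambda>N::nat. 1 / (real N - 1)) \<longlongrightarrow> 0) sequentially"
proof -
  have "filterlim (\<lambda>N::nat. -1 + real N) at_top sequentially"
    by (rule filterlim_tendsto_add_at_top[OF tendsto_const filterlim_real_sequentially])
  then have "filterlim (\<lambda>N::nat. real N - 1) at_infinity sequentially"
    by (simp add: filterlim_at_top_imp_at_infinity)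
  then show ?thesis by (intro tendsto_divide_0[OF tendsto_const])
qed

lemma Vm_tendsto:
  assumes "(g \<longlongrightarrow> l) F"
  shows "((\<lambda>x. Vm k tt (g x)) \<longlongrightarrow> Vm k tt l) F"
  unfolding Vm_def by (intro tendsto_sum tendsto_prod tendsto_divide tendsto_power tendsto_add tendsto_const assms) auto

theorem lemma8:
  fixes n k :: nat
    and M :: "nat \<Rightarrow> 'a measure"
    and \<nu> :: "nat \<Rightarrow> nat \<Rightarrow> nat \<Rightarrow> 'a \<Rightarrow> nat"
    and b :: "nat \<Rightarrow> real"
    and tt :: "nat \<Rightarrow> real" and T :: real
  assumes prob: "\<And>N. n \<le> N \<Longrightarrow> prob_space (M N)"
    and meas: "\<And>N t i. n \<le> N \<Longrightarrow> 1 \<le> t \<Longrightarrow> 1 \<le> i \<Longrightarrow> i \<le> N \<Longrightarrow>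
                 \<nu> N t i \<in> measurable (M N) (count_space UNIV)"
    and total: "\<And>N t \<omega>. n \<le> N \<Longrightarrow> 1 \<le> t \<Longrightarrow> \<omega> \<in> space (M N) \<Longrightarrow>
                 (\<Sum>i=1..N. \<nu> N t i \<omega>) = N"
    and tau_fin: "eventually (\<lambda>N. \<forall>u\<ge>0. AE \<omega> in M N.
                    tauN (\<lambda>r i. \<nu> N r i \<omega>) N u \<noteq> \<infinity>) sequentially"
    and b_lim: "b \<longlonglongrightarrow> 0"
    and third: "eventually (\<lambda>N. AE \<omega> in M N. \<forall>t\<ge>1.
        (1 / ff N 3) * (\<Sum>i=1..N. real_cond_exp (M N) (filt (M N) (\<nu> N) N (t - 1))
                                     (\<lambda>x. ff (\<nu> N t i x) 3) \<omega>)
        \<le> b N * ((1 / ff N 2) * (\<Sum>i=1..N. real_cond_exp (M N) (filt (M N) (\<nu> N) N (t - 1))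
                                     (\<lambda>x. ff (\<nu> N t i x) 2) \<omega>))) sequentially"
    and t0: "tt 0 = 0"
    and tmono: "\<And>j. j < k \<Longrightarrow> tt j \<le> tt (Suc j)"
    and tT: "tt k \<le> T"
  shows "limsup (\<lambda>N. ereal (\<integral>\<omega>. lhs_rv n (\<lambda>r i. \<nu> N r i \<omega>) N k tt T \<partial>M N))
           \<le> ereal (rhs n k tt T)"
proof -
  define K where "K = kap n * 2 ^ n"
  define H where "H \<epsilon> = alpha n ^ k * exp (- alpha n * T) * exp (alpha n * real k * (2 * \<epsilon>) + K * (\<epsilon>\<^sup>2 + (2 * \<epsilon>) * (T + 2 * \<epsilon>))) * Vm k tt (2 * \<epsilon>)" for \<epsilon>
  define LS where "LS = limsup (\<lambda>N. ereal (\<integral>\<omega>. lhs_rv n (\<lambda>r i. \<nu> N r i \<omega>) N k tt T \<partial>M N))"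
  have ttm: "\<And>i j. i \<le> j \<Longrightarrow> j \<le> k \<Longrightarrow> tt i \<le> tt j" using mono_bounded[of k tt] tmono by blast
  have T0: "0 \<le> T" using ttm[of 0 k] t0 tT by simp
  have step: "LS \<le> ereal (H \<epsilon>)" if eps: "0 < \<epsilon>" for \<epsilon>
  proof -
    define \<eta> where "\<eta> = \<epsilon>\<^sup>2"
    have eta: "0 < \<eta>" unfolding \<eta>_def using eps by simp
    define mN where "mN N = \<eta> / \<epsilon> + \<epsilon> + 1 / (real N - 1)" for N :: nat
    define G where "G N = alpha n ^ k * exp (- alpha n * T)
        * exp (alpha n * real k * mN N + kap n * 2 ^ n * (\<eta> + mN N * (T + mN N)))
        * Vm k tt (mN N) + alpha n ^ k * Vm k tt 1 * (\<bar>b N\<bar> * (T + 1) / \<eta>)" for N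
    have ev: "eventually (\<lambda>N. (\<integral>\<omega>. lhs_rv n (\<lambda>r i. \<nu> N r i \<omega>) N k tt T \<partial>M N) \<le> G N) sequentially"
      using tau_fin third eventually_ge_at_top[of "2 * n + 4"]
    proof eventually_elim
      case (elim N)
      have nN: "n \<le> N" using elim(3) by simp
      show ?case unfolding G_def mN_def
        by (rule integral_bound_N[OF prob[OF nN] meas[OF nN] total[OF nN] _ elim(2) _ _ t0 tmono tT eps eta])
           (use elim(1) T0 elim(3) in auto)
    qed
    have mlim: "mN \<longlonglongrightarrow> \<eta> / \<epsilon> + \<epsilon>"
      unfolding mN_def using tendsto_add[OF tendsto_const inv_lim, of "\<eta> / \<epsilon> + \<epsilon>"] by simp
    have blim: "(\<lambda>N. \<bar>b N\<bar>) \<longlonglongrightarrow> 0" using tendsto_rabs_zero[OF b_lim] .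
    have Glim: "G \<longlonglongrightarrow> alpha n ^ k * exp (- alpha n * T)
        * exp (alpha n * real k * (\<eta> / \<epsilon> + \<epsilon>) + kap n * 2 ^ n * (\<eta> + (\<eta> / \<epsilon> + \<epsilon>) * (T + (\<eta> / \<epsilon> + \<epsilon>))))
        * Vm k tt (\<eta> / \<epsilon> + \<epsilon>) + alpha n ^ k * Vm k tt 1 * (0 * (T + 1) / \<eta>)"
      unfolding G_def using eta by (intro tendsto_intros Vm_tendsto mlim blim) auto
    have "\<eta> / \<epsilon> + \<epsilon> = 2 * \<epsilon>" unfolding \<eta>_def using eps by (simp add: power2_eq_square)
    then have Gl: "G \<longlonglongrightarrow> H \<epsilon>" using Glim unfolding H_def K_def \<eta>_def by simp
    have "LS \<le> limsup (\<lambda>N. ereal (G N))"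
      unfolding LS_def by (rule Limsup_mono) (use ev in \<open>auto elim: eventually_mono\<close>)
    also have "limsup (\<lambda>N. ereal (G N)) = ereal (H \<epsilon>)"
      by (rule lim_imp_Limsup) (auto intro: tendsto_ereal Gl)
    finally show ?thesis .
  qed
  have Hlim: "((\<lambda>\<epsilon>. ereal (H \<epsilon>)) \<longlongrightarrow> ereal (H 0)) (at_right 0)"
    unfolding H_def by (intro tendsto_ereal tendsto_intros Vm_tendsto tendsto_ident_at)
  have "LS \<le> ereal (H 0)"
  proof (rule tendsto_lowerbound[OF Hlim])
    show "\<forall>\<^sub>F \<epsilon> in at_right 0. LS \<le> ereal (H \<epsilon>)"
      using eventually_at_right_less[of 0] by (rule eventually_mono) (rule step)
  qed simp
  moreover have "H 0 = rhs n k tt T" unfolding H_def rhs_Vm by simp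
  ultimately show ?thesis unfolding LS_def by simp
qed

end
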